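(* Let $d\ge2$ and $n\ge1$. Then $$\dim_{\mathbb C}\big(A_{d,n}/R'(1)\big)=(2^{n-1}-1)d^2-(2^{n-1}-2)d,$$ and the images in $A_{d,n}/R'(1)$ of the monomials in $$\mathcal{B}_{d,n}(1)=\Big\{x_i^ax_{i+1}^b\prod_{j=i+2}^n x_j^{\epsilon_j}\;\Big|\;1\le i<n,\ 1\le a<d,\ 0\le b<d,\ \epsilon_j\in\{0,1\}\Big\}\cup\{x_n^b\mid 0\le b<d\}$$ form a basis of $A_{d,n}/R'(1)$. (For $d=2$, $\mathcal{B}_{2,n}(1)$ is the set of all monomials $x_1^{r_1}\cdots x_n^{r_n}$, $r_j\in\{0,1\}$; for $d>2$ it is the set of monomials $x_1^{r_1}\cdots x_n^{r_n}$, $r_j\in\{0,\dots,d-1\}$, not divisible by $x_ix_k^2$ for any $i<k$ with $k-i\ge2$.)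
   Context: $A_{d,n}$ is the complex group algebra of $(\mathbb Z/d\mathbb Z)^n$ with commuting generators $x_1,\dots,x_n$ satisfying $x_j^d=1$; it has basis the monomials $x_1^{r_1}\cdots x_n^{r_n}$, $r_j\in\{0,\dots,d-1\}$. A monomial $x_1^{a_1}\cdots x_n^{a_n}$ divides $x_1^{b_1}\cdots x_n^{b_n}$ (both with exponents in $\{0,\dots,d-1\}$) if $a_i\le b_i$ for all $i$. $R'(1)$ is the ideal of $A_{d,n}$ generated by the elements $(x_i-x_j)(x_i-x_k)(x_j-x_k)$ for $1\le i<j<k\le n$. *)

theory Defs
  imports Complex_Main "HOL-Library.FuncSet"
begin

text \<open>Model of the group algebra A_{d,n} = C[(Z/dZ)^n].
  A monomial x_1^{r_1}...x_n^{r_n} with r_j in {0..d-1} is identified with its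
  exponent vector r in PiE {1..n} ({..<d}).  An element of A_{d,n} is a
  complex-valued function on exponent vectors (its coefficient vector),
  vanishing outside the valid exponent vectors.\<close>

definition exps :: "nat \<Rightarrow> nat \<Rightarrow> (nat \<Rightarrow> nat) set" where
  "exps d n = PiE {1..n} (\<lambda>_. {..<d})"

type_synonym elem = "(nat \<Rightarrow> nat) \<Rightarrow> complex"

definition GA :: "nat \<Rightarrow> nat \<Rightarrow> elem set" where
  "GA d n = {a. \<forall>r. r \<notin> exps d n \<longrightarrow> a r = 0}"

definition mono :: "nat \<Rightarrow> nat \<Rightarrow> (nat \<Rightarrow> nat) \<Rightarrow> elem" where
  "mono d n r = (\<lambda>s. if s = r then 1 else 0)"

definition addexp :: "nat \<Rightarrow> nat \<Rightarrow> (nat \<Rightarrow> nat) \<Rightarrow> (nat \<Rightarrow> nat) \<Rightarrow> (nat \<Rightarrow> nat)" where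
  "addexp d n s t = restrict (\<lambda>j. (s j + t j) mod d) {1..n}"

definition gmult :: "nat \<Rightarrow> nat \<Rightarrow> elem \<Rightarrow> elem \<Rightarrow> elem" where
  "gmult d n a b = (\<lambda>r. \<Sum>s\<in>exps d n. \<Sum>t\<in>exps d n.
      if addexp d n s t = r then a s * b t else 0)"

definition gadd :: "elem \<Rightarrow> elem \<Rightarrow> elem" where
  "gadd a b = (\<lambda>r. a r + b r)"

definition gsub :: "elem \<Rightarrow> elem \<Rightarrow> elem" where
  "gsub a b = (\<lambda>r. a r - b r)"

definition gzero :: elem where
  "gzero = (\<lambda>r. 0)"

definition var :: "nat \<Rightarrow> nat \<Rightarrow> nat \<Rightarrow> elem" where
  "var d n i = mono d n (restrict (\<lambda>j. if j = i then 1 mod d else 0) {1..n})"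

definition gen3 :: "nat \<Rightarrow> nat \<Rightarrow> nat \<Rightarrow> nat \<Rightarrow> nat \<Rightarrow> elem" where
  "gen3 d n i j k = gmult d n (gmult d n (gsub (var d n i) (var d n j))
                                        (gsub (var d n i) (var d n k)))
                               (gsub (var d n j) (var d n k))"

inductive_set R1 :: "nat \<Rightarrow> nat \<Rightarrow> elem set" for d n where
  zero: "gzero \<in> R1 d n"
| gen: "1 \<le> i \<Longrightarrow> i < j \<Longrightarrow> j < k \<Longrightarrow> k \<le> n \<Longrightarrow> gen3 d n i j k \<in> R1 d n"
| add: "a \<in> R1 d n \<Longrightarrow> b \<in> R1 d n \<Longrightarrow> gadd a b \<in> R1 d n"
| mult: "c \<in> GA d n \<Longrightarrow> a \<in> R1 d n \<Longrightarrow> gmult d n c a \<in> R1 d n"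

definition lincomb :: "'i set \<Rightarrow> ('i \<Rightarrow> complex) \<Rightarrow> ('i \<Rightarrow> elem) \<Rightarrow> elem" where
  "lincomb I c b = (\<lambda>r. \<Sum>i\<in>I. c i * b i r)"

definition quot_basis :: "elem set \<Rightarrow> elem set \<Rightarrow> 'i set \<Rightarrow> ('i \<Rightarrow> elem) \<Rightarrow> bool" where
  "quot_basis A R I b \<longleftrightarrow>
     finite I \<and> (\<forall>i\<in>I. b i \<in> A) \<and>
     (\<forall>a\<in>A. \<exists>c. gsub a (lincomb I c b) \<in> R) \<and>
     (\<forall>c. lincomb I c b \<in> R \<longrightarrow> (\<forall>i\<in>I. c i = 0))"

definition quot_dim :: "elem set \<Rightarrow> elem set \<Rightarrow> nat" where
  "quot_dim A R = (THE m. \<exists>(I :: (nat \<Rightarrow> nat) set) b. card I = m \<and> quot_basis A R I b)"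

definition Bset :: "nat \<Rightarrow> nat \<Rightarrow> (nat \<Rightarrow> nat) set" where
  "Bset d n =
     {restrict (\<lambda>j. if j = i then a else if j = i + 1 then b
                     else if j \<ge> i + 2 then \<epsilon> j else 0) {1..n}
       | i a b \<epsilon>. 1 \<le> i \<and> i < n \<and> 1 \<le> a \<and> a < d \<and> b < d \<and> (\<forall>j. \<epsilon> j \<in> {0, 1})}
     \<union> {restrict (\<lambda>j. if j = n then b else 0) {1..n} | b. b < d}"

definition mdvd :: "nat \<Rightarrow> (nat \<Rightarrow> nat) \<Rightarrow> (nat \<Rightarrow> nat) \<Rightarrow> bool" where
  "mdvd n a b \<longleftrightarrow> (\<forall>j\<in>{1..n}. a j \<le> b j)"

definition xixk2 :: "nat \<Rightarrow> nat \<Rightarrow> nat \<Rightarrow> (nat \<Rightarrow> nat)" where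
  "xixk2 n i k = restrict (\<lambda>j. if j = i then 1 else if j = k then 2 else 0) {1..n}"

end

theory Submission
  imports Defs "HOL-Library.Function_Algebras"
begin


definition om :: "nat \<Rightarrow> complex" where "om d = cis (2*pi / real d)"

lemma om_pow: "om d ^ m = cis (2*pi*real m / real d)"
  unfolding om_def DeMoivre by (simp add: field_simps)

lemma om_pow_d: "d > 0 \<Longrightarrow> om d ^ d = 1"
  by (simp add: om_pow)

lemma om_nz: "om d \<noteq> 0"
  by (simp add: om_def)

lemma om_pow_mod: assumes "d > 0" shows "om d ^ m = om d ^ (m mod d)"
proof -
  have "om d ^ m = om d ^ (d * (m div d) + m mod d)" by simp
  also have "\<dots> = (om d ^ d) ^ (m div d) * om d ^ (m mod d)"
    by (simp only: power_add power_mult)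
  finally have "om d ^ m = (om d ^ d) ^ (m div d) * om d ^ (m mod d)" .
  thus ?thesis using om_pow_d[OF assms] by simp
qed

lemma om_pow1: assumes "0 < m" "m < d" shows "om d ^ m \<noteq> 1"
proof
  assume "om d ^ m = 1"
  hence "cis (2*pi*real m / real d) = 1" unfolding om_pow .
  hence "cos (2*pi*real m / real d) = 1" by (metis cis.sel(1) one_complex.sel(1))
  then obtain z :: int where z: "2*pi*real m / real d = real_of_int z * 2 * pi"
    using cos_one_2pi_int by meson
  hence "real m / real d = z"
  proof -
    have "real m / real d = (2*pi*real m / real d) / (2*pi)" by simp
    also have "\<dots> = z" using z by simp
    finally show ?thesis .
  qed
  moreover have "0 < real m / real d" "real m / real d < 1" using assms by auto
  ultimately have "0 < real_of_int z" "real_of_int z < 1" by auto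
  hence "0 < z" "z < 1" by simp_all
  thus False by simp
qed

lemma om_inj: assumes "a < d" "b < d" "om d ^ a = om d ^ b" shows "a = b"
proof (rule ccontr)
  assume ne: "a \<noteq> b"
  { fix a b :: nat assume ab: "a < b" "b < d" "om d ^ a = om d ^ b"
    have "om d ^ b = om d ^ a * om d ^ (b - a)" using ab by (metis le_add_diff_inverse less_imp_le power_add)
    hence "om d ^ (b - a) = 1" using ab om_nz by simp
    moreover have "0 < b - a" "b - a < d" using ab by auto
    ultimately have False using om_pow1[of "b - a" d] by blast }
  note X = this
  show False
  proof (cases "a < b")
    case True thus False using X[of a b] assms by blast
  next
    case False hence "b < a" using ne by simp
    thus False using X[of b a] assms by auto
  qed
qed

lemma pow_comm: "((z::complex) ^ a) ^ b = (z ^ b) ^ a"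
  by (simp add: power_mult[symmetric] mult.commute)

lemma om_root: assumes "d > 0" shows "(om d ^ a) ^ d = 1"
  proof -
  have "(om d ^ a) ^ d = (om d ^ d) ^ a" by (rule pow_comm)
  thus ?thesis using om_pow_d[OF assms] by simp
qed

lemma geo: assumes "x < d" "y < d"
  shows "(\<Sum>t<d. (om d ^ x / om d ^ y) ^ t) = (if x = y then of_nat d else 0)"
proof (cases "x = y")
  case True thus ?thesis using om_nz by simp
next
  case False
  let ?z = "om d ^ x / om d ^ y"
  have d0: "d > 0" using assms by auto
  have "?z \<noteq> 1" using om_inj[OF assms] False om_nz by (auto simp: field_simps)
  moreover have "?z ^ d = 1" using om_root[OF d0] by (simp add: power_divide)
  ultimately show ?thesis using False by (simp add: geometric_sum)
qed

lemma vanish: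
  assumes "\<And>\<alpha>. \<alpha> < d \<Longrightarrow> (\<Sum>b<d. g b * (om d ^ \<alpha>) ^ b) = 0" and "c < d"
  shows "g c = 0"
proof -
  have "0 = (\<Sum>\<alpha><d. (\<Sum>b<d. g b * (om d ^ \<alpha>) ^ b) / (om d ^ \<alpha>) ^ c)"
    using assms(1) by simp
  also have "\<dots> = (\<Sum>\<alpha><d. \<Sum>b<d. g b * (om d ^ b / om d ^ c) ^ \<alpha>)"
  proof (intro sum.cong refl)
    fix \<alpha>
    have q: "(om d ^ \<alpha>) ^ b / (om d ^ \<alpha>) ^ c = (om d ^ b / om d ^ c) ^ \<alpha>" for b
      by (simp only: power_divide pow_comm[of "om d" b \<alpha>] pow_comm[of "om d" c \<alpha>])
    show "(\<Sum>b<d. g b * (om d ^ \<alpha>) ^ b) / (om d ^ \<alpha>) ^ c = (\<Sum>b<d. g b * (om d ^ b / om d ^ c) ^ \<alpha>)"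
      unfolding sum_divide_distrib by (intro sum.cong refl) (simp only: times_divide_eq_right[symmetric] q)
  qed
  also have "\<dots> = (\<Sum>b<d. g b * (\<Sum>\<alpha><d. (om d ^ b / om d ^ c) ^ \<alpha>))"
    by (subst sum.swap) (simp add: sum_distrib_left)
  also have "\<dots> = (\<Sum>b<d. if b = c then g b * of_nat d else 0)"
    by (rule sum.cong) (auto simp: geo assms(2))
  also have "\<dots> = g c * of_nat d" using assms(2) by simp
  finally show ?thesis using assms(2) by simp
qed

lemma vanish_group:
  assumes fin: "finite R" and h: "\<And>r. r \<in> R \<Longrightarrow> h r < d"
    and van: "\<And>\<alpha>. \<alpha> < d \<Longrightarrow> (\<Sum>r\<in>R. f r * (om d ^ \<alpha>) ^ h r) = 0" and "m < d"
  shows "(\<Sum>r\<in>{r\<in>R. h r = m}. f r) = 0"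
proof -
  define g where "g b = (\<Sum>r\<in>{r\<in>R. h r = b}. f r)" for b
  have "g m = 0"
  proof (rule vanish[OF _ \<open>m < d\<close>])
    fix \<alpha> assume "\<alpha> < d"
    have "(\<Sum>b<d. g b * (om d ^ \<alpha>) ^ b) = (\<Sum>b<d. \<Sum>r\<in>{r\<in>R. h r = b}. f r * (om d ^ \<alpha>) ^ h r)"
      unfolding g_def sum_distrib_right by (intro sum.cong) auto
    also have "\<dots> = (\<Sum>r\<in>R. f r * (om d ^ \<alpha>) ^ h r)"
      using sum.group[OF fin, of "{..<d}" h "\<lambda>r. f r * (om d ^ \<alpha>) ^ h r"] h by auto
    finally show "(\<Sum>b<d. g b * (om d ^ \<alpha>) ^ b) = 0" using van[OF \<open>\<alpha> < d\<close>] by simp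
  qed
  thus ?thesis by (simp add: g_def)
qed



definition chi :: "nat \<Rightarrow> nat \<Rightarrow> (nat \<Rightarrow> nat) \<Rightarrow> (nat \<Rightarrow> nat) \<Rightarrow> complex" where
  "chi d n k r = (\<Prod>j\<in>{1..n}. (om d ^ k j) ^ r j)"

definition ev :: "nat \<Rightarrow> nat \<Rightarrow> (nat \<Rightarrow> nat) \<Rightarrow> elem \<Rightarrow> complex" where
  "ev d n k a = (\<Sum>s\<in>exps d n. a s * chi d n k s)"

definition VV :: "nat \<Rightarrow> nat \<Rightarrow> (nat \<Rightarrow> nat) set" where
  "VV d n = {k \<in> exps d n. \<forall>i j l. 1 \<le> i \<longrightarrow> i < j \<longrightarrow> j < l \<longrightarrow> l \<le> n \<longrightarrow>
       k i = k j \<or> k i = k l \<or> k j = k l}"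

lemma exps_finite[simp]: "finite (exps d n)"
  unfolding exps_def by (intro finite_PiE) auto

lemma addexp_in: "d > 0 \<Longrightarrow> addexp d n s t \<in> exps d n"
  unfolding addexp_def exps_def by auto

lemma pow_mod_root: assumes "z ^ d = (1::complex)" shows "z ^ m = z ^ (m mod d)"
proof -
  have "z ^ m = z ^ (d * (m div d) + m mod d)" by simp
  also have "\<dots> = (z ^ d) ^ (m div d) * z ^ (m mod d)"
    by (simp only: power_add power_mult)
  finally show ?thesis using assms by simp
qed

lemma chi_add: assumes "d > 0"
  shows "chi d n k (addexp d n s t) = chi d n k s * chi d n k t"
proof -
  have "chi d n k (addexp d n s t) = (\<Prod>j\<in>{1..n}. (om d ^ k j) ^ ((s j + t j) mod d))"
    unfolding chi_def addexp_def by (intro prod.cong) auto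
  also have "\<dots> = (\<Prod>j\<in>{1..n}. (om d ^ k j) ^ s j * (om d ^ k j) ^ t j)"
    by (intro prod.cong refl) (metis pow_mod_root[OF om_root[OF assms]] power_add)
  also have "\<dots> = chi d n k s * chi d n k t"
    unfolding chi_def by (rule prod.distrib)
  finally show ?thesis .
qed

lemma ev_mult: assumes "d > 0"
  shows "ev d n k (gmult d n a b) = ev d n k a * ev d n k b"
proof -
  let ?E = "exps d n"
  have "ev d n k (gmult d n a b) =
     (\<Sum>r\<in>?E. \<Sum>s\<in>?E. \<Sum>t\<in>?E. if addexp d n s t = r then a s * b t * chi d n k r else 0)"
    unfolding ev_def gmult_def sum_distrib_right by (intro sum.cong refl) auto
  also have "\<dots> = (\<Sum>s\<in>?E. \<Sum>r\<in>?E. \<Sum>t\<in>?E. if addexp d n s t = r then a s * b t * chi d n k r else 0)"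
    by (rule sum.swap)
  also have "\<dots> = (\<Sum>s\<in>?E. \<Sum>t\<in>?E. \<Sum>r\<in>?E. if addexp d n s t = r then a s * b t * chi d n k r else 0)"
    by (rule sum.cong[OF refl]) (rule sum.swap)
  also have "\<dots> = (\<Sum>s\<in>?E. \<Sum>t\<in>?E. a s * b t * chi d n k (addexp d n s t))"
    by (intro sum.cong refl) (simp add: addexp_in[OF assms])
  also have "\<dots> = (\<Sum>s\<in>?E. \<Sum>t\<in>?E. (a s * chi d n k s) * (b t * chi d n k t))"
    by (intro sum.cong refl) (simp add: chi_add[OF assms] mult_ac)
  also have "\<dots> = ev d n k a * ev d n k b"
    unfolding ev_def sum_product by simp
  finally show ?thesis .
qed

lemma ev_add: "ev d n k (gadd a b) = ev d n k a + ev d n k b"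
  unfolding ev_def gadd_def by (simp add: sum.distrib distrib_right)

lemma ev_sub: "ev d n k (gsub a b) = ev d n k a - ev d n k b"
  unfolding ev_def gsub_def by (simp add: sum_subtractf left_diff_distrib)

lemma ev_zero: "ev d n k gzero = 0"
  unfolding ev_def gzero_def by simp

lemma ev_mono: assumes "r \<in> exps d n" shows "ev d n k (mono d n r) = chi d n k r"
proof -
  have "ev d n k (mono d n r) = (\<Sum>s\<in>exps d n. if s = r then chi d n k s else 0)"
    unfolding ev_def mono_def by (intro sum.cong) auto
  also have "\<dots> = chi d n k r" using assms by (simp add: sum.delta')
  finally show ?thesis .
qed

lemma ev_var: assumes "d \<ge> 2" "1 \<le> i" "i \<le> n"
  shows "ev d n k (var d n i) = om d ^ k i"
proof -
  let ?e = "restrict (\<lambda>j. if j = i then 1 mod d else 0) {1..n}"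
  have e: "?e \<in> exps d n" using assms unfolding exps_def by auto
  have "chi d n k ?e = (\<Prod>j\<in>{1..n}. if j = i then om d ^ k i else 1)"
    unfolding chi_def using assms by (intro prod.cong refl) auto
  also have "\<dots> = om d ^ k i" using assms by (simp add: prod.delta)
  finally show ?thesis unfolding var_def using ev_mono[OF e] by simp
qed

lemma gmult_GA: "d > 0 \<Longrightarrow> gmult d n a b \<in> GA d n"
  unfolding GA_def gmult_def using addexp_in by (auto intro!: sum.neutral)

lemma R1_GA: assumes "d > 0" "a \<in> R1 d n" shows "a \<in> GA d n"
  using assms(2)
proof induction
  case zero thus ?case by (simp add: GA_def gzero_def)
next
  case (gen i j k) thus ?case unfolding gen3_def using gmult_GA[OF assms(1)] by blast
next
  case (add a b) thus ?case by (simp add: GA_def gadd_def)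
next
  case (mult c a) thus ?case using gmult_GA[OF assms(1)] by blast
qed

lemma F1: assumes "d \<ge> 2" "a \<in> R1 d n" "k \<in> VV d n" shows "ev d n k a = 0"
  using assms(2)
proof induction
  case zero thus ?case by (simp add: ev_zero)
next
  case (gen i j l)
  have d0: "d > 0" using assms by simp
  have "ev d n k (gen3 d n i j l) = (om d ^ k i - om d ^ k j) * (om d ^ k i - om d ^ k l) * (om d ^ k j - om d ^ k l)"
    unfolding gen3_def using gen assms(1) by (simp add: ev_mult[OF d0] ev_sub ev_var)
  moreover have "k i = k j \<or> k i = k l \<or> k j = k l" using assms(3) gen unfolding VV_def by blast
  ultimately show ?case by auto
next
  case (add a b) thus ?case by (simp add: ev_add)
next
  case (mult c a) thus ?case using assms(1) by (simp add: ev_mult)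
qed



definition idem :: "nat \<Rightarrow> nat \<Rightarrow> (nat \<Rightarrow> nat) \<Rightarrow> elem" where
  "idem d n k = (\<lambda>r. if r \<in> exps d n then (\<Prod>j\<in>{1..n}. (inverse (om d ^ k j)) ^ r j) / of_nat d ^ n else 0)"

lemma psum: "(\<Sum>r\<in>exps d n. \<Prod>j\<in>{1..n}. f j (r j)) = (\<Prod>j\<in>{1..n}. \<Sum>t<d. (f j t :: complex))"
  unfolding exps_def by (rule prod_sum_PiE[symmetric]) auto

lemma prodeq: assumes "x \<in> exps d n" "y \<in> exps d n"
  shows "(\<Prod>j\<in>{1..n}. if x j = y j then (of_nat d::complex) else 0) = (if x = y then of_nat d ^ n else 0)"
proof (cases "x = y")
  case True thus ?thesis by simp
next
  case False
  then obtain j where "j \<in> {1..n}" "x j \<noteq> y j"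
    using assms unfolding exps_def by (metis PiE_ext)
  thus ?thesis using False by (auto intro!: prod_zero)
qed

lemma pw: "((z::complex) ^ t) ^ x * inverse (z ^ t) ^ y = (z ^ x / z ^ y) ^ t"
proof -
  have "(z ^ x / z ^ y) ^ t = (z ^ x) ^ t * (inverse (z ^ y)) ^ t"
    by (simp add: divide_inverse power_mult_distrib)
  also have "\<dots> = (z ^ t) ^ x * inverse (z ^ t) ^ y"
    by (simp add: power_inverse[symmetric] pow_comm[of z x t] pow_comm[of z y t] pow_comm[of "inverse z" y t])
  finally show ?thesis by simp
qed

lemma kern: assumes "d > 0" "x \<in> exps d n" "y \<in> exps d n"
  shows "(\<Sum>k\<in>exps d n. \<Prod>j\<in>{1..n}. (om d ^ k j) ^ x j * inverse (om d ^ k j) ^ y j)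
        = (if x = y then of_nat d ^ n else 0)"
proof -
  have xy: "\<And>j. j \<in> {1..n} \<Longrightarrow> x j < d \<and> y j < d" using assms unfolding exps_def by auto
  have "(\<Sum>k\<in>exps d n. \<Prod>j\<in>{1..n}. (om d ^ k j) ^ x j * inverse (om d ^ k j) ^ y j)
      = (\<Prod>j\<in>{1..n}. \<Sum>t<d. (om d ^ t) ^ x j * inverse (om d ^ t) ^ y j)"
    by (rule psum)
  also have "\<dots> = (\<Prod>j\<in>{1..n}. \<Sum>t<d. (om d ^ x j / om d ^ y j) ^ t)"
    by (intro prod.cong sum.cong refl) (rule pw)
  also have "\<dots> = (\<Prod>j\<in>{1..n}. if x j = y j then of_nat d else 0)"
    by (intro prod.cong refl) (simp add: geo xy)
  also have "\<dots> = (if x = y then of_nat d ^ n else 0)" by (rule prodeq[OF assms(2,3)])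
  finally show ?thesis .
qed

lemma ev_idem: assumes "d > 0" "k \<in> exps d n" "k' \<in> exps d n"
  shows "ev d n k' (idem d n k) = (if k' = k then 1 else 0)"
proof -
  have "ev d n k' (idem d n k) = (\<Sum>r\<in>exps d n. \<Prod>j\<in>{1..n}. (om d ^ r j) ^ k' j * inverse (om d ^ r j) ^ k j) / of_nat d ^ n"
    unfolding ev_def sum_divide_distrib
  proof (intro sum.cong refl)
    fix r assume r: "r \<in> exps d n"
    have i1: "(\<Prod>j\<in>{1..n}. inverse (om d ^ k j) ^ r j) = (\<Prod>j\<in>{1..n}. inverse (om d ^ r j) ^ k j)"
      by (intro prod.cong refl) (simp add: power_inverse pow_comm[of "om d"])
    have i2: "(\<Prod>j\<in>{1..n}. (om d ^ k' j) ^ r j) = (\<Prod>j\<in>{1..n}. (om d ^ r j) ^ k' j)"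
      by (intro prod.cong refl) (rule pow_comm)
    show "idem d n k r * chi d n k' r
       = (\<Prod>j\<in>{1..n}. (om d ^ r j) ^ k' j * inverse (om d ^ r j) ^ k j) / of_nat d ^ n"
      unfolding idem_def chi_def using r unfolding i1 i2 prod.distrib by simp
  qed
  also have "\<dots> = (if k' = k then of_nat d ^ n else 0) / of_nat d ^ n"
    by (simp only: kern[OF assms(1,3,2)])
  also have "\<dots> = (if k' = k then 1 else 0)" using assms by simp
  finally show ?thesis .
qed

lemma idem_GA: "idem d n k \<in> GA d n"
  unfolding GA_def idem_def by auto

lemma inversion: assumes "d > 0" "a \<in> GA d n"
  shows "a = (\<lambda>r. \<Sum>k\<in>exps d n. ev d n k a * idem d n k r)"
proof
  fix r show "a r = (\<Sum>k\<in>exps d n. ev d n k a * idem d n k r)"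
  proof (cases "r \<in> exps d n")
    case False thus ?thesis using assms(2) by (simp add: GA_def idem_def)
  next
    case True
    have "(\<Sum>k\<in>exps d n. ev d n k a * idem d n k r)
        = (\<Sum>k\<in>exps d n. \<Sum>s\<in>exps d n. a s * ((\<Prod>j\<in>{1..n}. (om d ^ k j) ^ s j * inverse (om d ^ k j) ^ r j) / of_nat d ^ n))"
      unfolding ev_def idem_def chi_def sum_distrib_right using True
      by (intro sum.cong refl) (simp add: prod.distrib)
    also have "\<dots> = (\<Sum>s\<in>exps d n. a s * ((\<Sum>k\<in>exps d n. \<Prod>j\<in>{1..n}. (om d ^ k j) ^ s j * inverse (om d ^ k j) ^ r j) / of_nat d ^ n))"
      by (subst sum.swap) (simp add: sum_distrib_left sum_divide_distrib)
    also have "\<dots> = (\<Sum>s\<in>exps d n. if s = r then a s else 0)"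
      apply (intro sum.cong refl)
      subgoal for s by (simp only: kern[OF assms(1) _ True, of s]) (use assms(1) in simp)
      done
    also have "\<dots> = a r" using True by simp
    finally show ?thesis by simp
  qed
qed

lemma ev_inj: assumes "d > 0" "a \<in> GA d n" "b \<in> GA d n" "\<And>k. k \<in> exps d n \<Longrightarrow> ev d n k a = ev d n k b"
  shows "a = b"
proof -
  have "a = (\<lambda>r. \<Sum>k\<in>exps d n. ev d n k a * idem d n k r)" by (rule inversion[OF assms(1,2)])
  also have "\<dots> = (\<lambda>r. \<Sum>k\<in>exps d n. ev d n k b * idem d n k r)" using assms(4) by simp
  also have "\<dots> = b" by (rule inversion[OF assms(1,3), symmetric])
  finally show ?thesis .
qed

lemma R1_sum: assumes "finite S" "\<And>x. x \<in> S \<Longrightarrow> f x \<in> R1 d n"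
  shows "(\<lambda>r. \<Sum>x\<in>S. f x r) \<in> R1 d n"
  using assms
proof (induction S rule: finite_induct)
  case empty
  have "(\<lambda>r. \<Sum>x\<in>{}. f x r) = gzero" by (simp add: gzero_def)
  thus ?case using R1.zero by simp
next
  case (insert x S)
  have "(\<lambda>r. \<Sum>x\<in>insert x S. f x r) = gadd (f x) (\<lambda>r. \<Sum>x\<in>S. f x r)"
    using insert by (simp add: gadd_def)
  thus ?case using insert by (simp add: R1.add)
qed

lemma ev_scale: "ev d n k (\<lambda>r. c * a r) = c * ev d n k a"
  unfolding ev_def by (simp add: sum_distrib_left mult_ac)

lemma idem_R1: assumes "d \<ge> 2" "k \<in> exps d n" "k \<notin> VV d n"
  shows "(\<lambda>r. c * idem d n k r) \<in> R1 d n"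
proof -
  have d0: "d > 0" using assms by simp
  obtain i j l where ijl: "1 \<le> i" "i < j" "j < l" "l \<le> n" "k i \<noteq> k j" "k i \<noteq> k l" "k j \<noteq> k l"
    using assms(2,3) unfolding VV_def by blast
  have lt: "k i < d" "k j < d" "k l < d" using assms(2) ijl unfolding exps_def by auto
  let ?g = "ev d n k (gen3 d n i j l)"
  have gv: "\<And>k. ev d n k (gen3 d n i j l) = (om d ^ k i - om d ^ k j) * (om d ^ k i - om d ^ k l) * (om d ^ k j - om d ^ k l)"
    unfolding gen3_def using ijl assms(1) by (simp add: ev_mult[OF d0] ev_sub ev_var)
  have "?g \<noteq> 0" unfolding gv using om_inj[OF lt(1,2)] om_inj[OF lt(1,3)] om_inj[OF lt(2,3)] ijl by auto
  let ?c = "\<lambda>r. (c / ?g) * idem d n k r"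
  have cGA: "?c \<in> GA d n" using idem_GA[of d n k] by (simp add: GA_def)
  have "gmult d n ?c (gen3 d n i j l) \<in> R1 d n"
    by (rule R1.mult[OF cGA R1.gen[OF ijl(1-4)]])
  moreover have "gmult d n ?c (gen3 d n i j l) = (\<lambda>r. c * idem d n k r)"
  proof (rule ev_inj[OF d0 gmult_GA[OF d0]])
    show "(\<lambda>r. c * idem d n k r) \<in> GA d n" using idem_GA[of d n k] by (simp add: GA_def)
    fix k' assume k': "k' \<in> exps d n"
    show "ev d n k' (gmult d n ?c (gen3 d n i j l)) = ev d n k' (\<lambda>r. c * idem d n k r)"
    proof -
      have e1: "ev d n k' ?c = c / ?g * (if k' = k then 1 else 0)"
        by (simp only: ev_scale ev_idem[OF d0 assms(2) k'])
      have e2: "ev d n k' (\<lambda>r. c * idem d n k r) = c * (if k' = k then 1 else 0)"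
        by (simp only: ev_scale ev_idem[OF d0 assms(2) k'])
      show ?thesis using \<open>?g \<noteq> 0\<close> by (simp only: ev_mult[OF d0] e1 e2) simp
    qed
  qed
  ultimately show ?thesis by simp
qed

lemma F2: assumes "d \<ge> 2" "a \<in> GA d n" "\<And>k. k \<in> VV d n \<Longrightarrow> ev d n k a = 0"
  shows "a \<in> R1 d n"
proof -
  have d0: "d > 0" using assms by simp
  have "a = (\<lambda>r. \<Sum>k\<in>exps d n. ev d n k a * idem d n k r)" by (rule inversion[OF d0 assms(2)])
  also have "\<dots> = (\<lambda>r. \<Sum>k\<in>exps d n - VV d n. ev d n k a * idem d n k r)"
    using assms(3) by (intro ext sum.mono_neutral_right) (auto simp: VV_def)
  finally have eq: "a = (\<lambda>r. \<Sum>k\<in>exps d n - VV d n. ev d n k a * idem d n k r)" .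
  have "(\<lambda>r. \<Sum>k\<in>exps d n - VV d n. ev d n k a * idem d n k r) \<in> R1 d n"
    by (rule R1_sum[where f="\<lambda>k r. ev d n k a * idem d n k r"]) (auto intro: idem_R1[OF assms(1)])
  thus ?thesis using eq by simp
qed



lemma sum_Pow_insert:
  assumes "finite M" "x \<notin> M"
  shows "(\<Sum>S\<in>Pow (insert x M). f S) = (\<Sum>S\<in>Pow M. f S) + (\<Sum>S\<in>Pow M. f (insert x S))"
proof -
  have "Pow (insert x M) = Pow M \<union> insert x ` Pow M" by (rule Pow_insert)
  moreover have "Pow M \<inter> insert x ` Pow M = {}" using assms by auto
  moreover have "inj_on (insert x) (Pow M)" using assms unfolding inj_on_def by auto
  ultimately show ?thesis using assms by (simp add: sum.union_disjoint sum.reindex)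
qed

lemma multilin:
  fixes u v :: complex
  assumes "finite M" "u \<noteq> v"
    "\<And>T. T \<subseteq> M \<Longrightarrow> (\<Sum>S\<in>Pow M. g S * (\<Prod>j\<in>S. if j \<in> T then v else u)) = 0"
    "S \<subseteq> M"
  shows "g S = 0"
  using assms(1,3,4)
proof (induction M arbitrary: g S rule: finite_induct)
  case empty
  hence "S = {}" by auto
  thus ?case using empty.prems(1)[of "{}"] by simp
next
  case (insert x M)
  define P where "P T S = (\<Prod>j\<in>S. if j \<in> T then v else u)" for T S :: "'a set"
  have PS: "P T (insert x S) = (if x \<in> T then v else u) * P T S" if "S \<subseteq> M" for T S
    using that insert(1,2) finite_subset unfolding P_def by (subst prod.insert) auto
  have PT: "P (insert x T) S = P T S" if "S \<subseteq> M" for T S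
    using that insert(2) unfolding P_def by (intro prod.cong) auto
  have eq: "(\<Sum>S\<in>Pow (insert x M). g S * P T S)
      = (\<Sum>S\<in>Pow M. g S * P T S) + (if x \<in> T then v else u) * (\<Sum>S\<in>Pow M. g (insert x S) * P T S)"
    if "T \<subseteq> insert x M" for T
  proof -
    have "(\<Sum>S\<in>Pow M. g (insert x S) * P T (insert x S)) = (if x \<in> T then v else u) * (\<Sum>S\<in>Pow M. g (insert x S) * P T S)"
      unfolding sum_distrib_left by (intro sum.cong refl) (simp add: PS)
    thus ?thesis by (simp add: sum_Pow_insert[OF insert(1,2)])
  qed
  have A: "(\<Sum>S\<in>Pow M. g S * P T S) + u * (\<Sum>S\<in>Pow M. g (insert x S) * P T S) = 0"
    if "T \<subseteq> M" for T
  proof -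
    have T1: "T \<subseteq> insert x M" "x \<notin> T" using that insert(2) by auto
    show ?thesis using insert(4)[OF T1(1)] eq[OF T1(1)] T1(2) unfolding P_def by simp
  qed
  have B: "(\<Sum>S\<in>Pow M. g S * P T S) + v * (\<Sum>S\<in>Pow M. g (insert x S) * P T S) = 0"
    if "T \<subseteq> M" for T
  proof -
    have T1: "insert x T \<subseteq> insert x M" using that by auto
    have "(\<Sum>S\<in>Pow M. g S * P (insert x T) S) = (\<Sum>S\<in>Pow M. g S * P T S)"
      by (intro sum.cong refl) (simp add: PT)
    moreover have "(\<Sum>S\<in>Pow M. g (insert x S) * P (insert x T) S) = (\<Sum>S\<in>Pow M. g (insert x S) * P T S)"
      by (intro sum.cong refl) (simp add: PT)
    ultimately show ?thesis using insert(4)[OF T1] eq[OF T1] unfolding P_def by simp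
  qed
  have C: "(\<Sum>S\<in>Pow M. g (insert x S) * P T S) = 0" if "T \<subseteq> M" for T
  proof -
    have "(v - u) * (\<Sum>S\<in>Pow M. g (insert x S) * P T S) = 0"
    proof -
      define X where "X = (\<Sum>S\<in>Pow M. g (insert x S) * P T S)"
      define Y where "Y = (\<Sum>S\<in>Pow M. g S * P T S)"
      have a: "Y + u * X = 0" "Y + v * X = 0" using A[OF that] B[OF that] unfolding X_def Y_def by auto
      have "(v - u) * X = (Y + v * X) - (Y + u * X)" by (simp add: algebra_simps)
      also have "\<dots> = 0" using a by simp
      finally show ?thesis unfolding X_def .
    qed
    thus ?thesis using assms(2) by simp
  qed
  have gi: "g (insert x S) = 0" if "S \<subseteq> M" for S
    using insert(3)[of "\<lambda>S. g (insert x S)" S] C that unfolding P_def by blast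
  have D: "(\<Sum>S\<in>Pow M. g S * P T S) = 0" if "T \<subseteq> M" for T
    using A[OF that] gi by simp
  have g0: "g S = 0" if "S \<subseteq> M" for S
    using insert(3)[of g S] D that unfolding P_def by blast
  show ?case
  proof (cases "x \<in> S")
    case True
    hence "S = insert x (S - {x})" by auto
    moreover have "S - {x} \<subseteq> M" using insert(5) by auto
    ultimately show ?thesis using gi by metis
  next
    case False thus ?thesis using insert(5) g0 by auto
  qed
qed

lemma vanish_group0:
  assumes fin: "finite R" and h: "\<And>r. r \<in> R \<Longrightarrow> h r < d"
    and van: "\<And>\<alpha>. \<alpha> < d \<Longrightarrow> K + (\<Sum>r\<in>R. f r * (om d ^ \<alpha>) ^ h r) = 0" and "m < d" "m \<noteq> 0"
  shows "(\<Sum>r\<in>{r\<in>R. h r = m}. f r) = 0"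
proof -
  define g where "g b = (if b = 0 then K else 0) + (\<Sum>r\<in>{r\<in>R. h r = b}. f r)" for b
  have "g m = 0"
  proof (rule vanish[OF _ \<open>m < d\<close>])
    fix \<alpha> assume "\<alpha> < d"
    have d0: "0 \<in> {..<d}" using \<open>\<alpha> < d\<close> by simp
    have "(\<Sum>b<d. g b * (om d ^ \<alpha>) ^ b) = (\<Sum>b<d. (if b = 0 then K else 0)) + (\<Sum>b<d. \<Sum>r\<in>{r\<in>R. h r = b}. f r * (om d ^ \<alpha>) ^ h r)"
      unfolding g_def distrib_right sum.distrib sum_distrib_right by (intro arg_cong2[where f="(+)"] sum.cong) auto
    also have "\<dots> = K + (\<Sum>r\<in>R. f r * (om d ^ \<alpha>) ^ h r)"
      using sum.group[OF fin, of "{..<d}" h "\<lambda>r. f r * (om d ^ \<alpha>) ^ h r"] h d0 by (auto simp: sum.delta)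
    finally show "(\<Sum>b<d. g b * (om d ^ \<alpha>) ^ b) = 0" using van[OF \<open>\<alpha> < d\<close>] by simp
  qed
  thus ?thesis using \<open>m \<noteq> 0\<close> by (simp add: g_def)
qed



definition Bc :: "nat \<Rightarrow> nat \<Rightarrow> (nat \<Rightarrow> nat) set" where
  "Bc d n = {r \<in> exps d n. \<forall>i k. 1 \<le> i \<longrightarrow> i + 2 \<le> k \<longrightarrow> k \<le> n \<longrightarrow> 1 \<le> r i \<longrightarrow> r k \<le> 1}"

lemma Bc_finite[simp]: "finite (Bc d n)"
  unfolding Bc_def by simp

lemma chi_low: assumes "1 \<le> p" "\<forall>j. 1 \<le> j \<and> j < p \<longrightarrow> r j = 0"
  shows "chi d n k r = (\<Prod>j\<in>{p..n}. (om d ^ k j) ^ r j)"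
  unfolding chi_def using assms by (intro prod.mono_neutral_right) auto

lemma exps_eqI: "x \<in> exps d n \<Longrightarrow> y \<in> exps d n \<Longrightarrow> (\<And>j. 1 \<le> j \<Longrightarrow> j \<le> n \<Longrightarrow> x j = y j) \<Longrightarrow> x = y"
  unfolding exps_def by (rule PiE_ext) auto

lemma VV_two: assumes "\<alpha> < d" "\<beta> < d" "\<And>j. f j = \<alpha> \<or> f j = \<beta>"
  shows "restrict f {1..n} \<in> VV d n"
proof -
  have lt: "f j < d" for j using assms(3)[of j] assms(1,2) by auto
  have "restrict f {1..n} \<in> exps d n" unfolding exps_def using lt by auto
  moreover have "restrict f {1..n} j = restrict f {1..n} l"
    if "1 \<le> i" "i < j" "j < l" "l \<le> n" "restrict f {1..n} i \<noteq> restrict f {1..n} j"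
     "restrict f {1..n} i \<noteq> restrict f {1..n} l" for i j l
    using that assms(3)[of i] assms(3)[of j] assms(3)[of l] by auto
  ultimately show ?thesis unfolding VV_def by blast
qed

lemma F3_step:
  assumes d2: "d \<ge> 2" and p: "1 \<le> p" "p < n"
    and van: "\<And>k. k \<in> VV d n \<Longrightarrow> (\<Sum>r\<in>Bc d n. c r * chi d n k r) = 0"
    and IH: "\<And>r. r \<in> Bc d n \<Longrightarrow> (\<exists>j. 1 \<le> j \<and> j < p \<and> r j \<noteq> 0) \<Longrightarrow> c r = 0"
    and r0: "r0 \<in> Bc d n" "\<forall>j. 1 \<le> j \<and> j < p \<longrightarrow> r0 j = 0" "r0 p \<noteq> 0"
  shows "c r0 = 0"
proof -
  define B where "B = Bc d n"
  define Bp where "Bp = {r\<in>B. \<forall>j. 1 \<le> j \<and> j < p \<longrightarrow> r j = 0}"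
  define R where "R = {r\<in>Bp. r p \<noteq> 0}"
  define M where "M = {p+2..n}"
  define Sr where "Sr r = {j\<in>M. r j = 1}" for r :: "nat \<Rightarrow> nat"
  have finB: "finite Bp" "finite R" unfolding Bp_def R_def B_def by auto
  have finM: "finite M" unfolding M_def by simp
  have vanp: "(\<Sum>r\<in>Bp. c r * chi d n k r) = 0" if "k \<in> VV d n" for k
  proof -
    have "(\<Sum>r\<in>Bp. c r * chi d n k r) = (\<Sum>r\<in>B. c r * chi d n k r)"
      unfolding Bp_def B_def using IH by (intro sum.mono_neutral_left) auto
    thus ?thesis using van[OF that] unfolding B_def by simp
  qed
  have Rexp: "r \<in> exps d n" if "r \<in> R" for r using that unfolding R_def Bp_def B_def Bc_def by auto
  have Rlt: "r j < d" if "r \<in> R" "1 \<le> j" "j \<le> n" for r j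
    using Rexp[OF that(1)] that unfolding exps_def by auto
  have R01: "r j \<le> 1" if "r \<in> R" "j \<in> M" for r j
    using that p(1) unfolding R_def Bp_def B_def Bc_def M_def by auto
  have ins: "{p..n} = insert p (insert (p+1) M)" unfolding M_def using p by auto
  have nM: "p \<notin> M" "p + 1 \<notin> M" unfolding M_def by auto
  have key: "(\<Sum>r\<in>R. c r * ((om d ^ \<alpha>) ^ r p - (om d ^ \<beta>) ^ r p) * (om d ^ \<alpha>) ^ r (p+1)
              * (\<Prod>j\<in>Sr r. if j \<in> T then om d ^ \<beta> else om d ^ \<alpha>)) = 0"
    if ab: "\<alpha> < d" "\<beta> < d" and T: "T \<subseteq> M" for \<alpha> \<beta> T
  proof -
    define y where "y j = (if j \<in> T then \<beta> else \<alpha>)" for j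
    define kA where "kA = restrict (\<lambda>j. if j \<le> p+1 then \<alpha> else y j) {1..n}"
    define kB where "kB = restrict (\<lambda>j. if j \<le> p then \<beta> else if j = p+1 then \<alpha> else y j) {1..n}"
    have kAV: "kA \<in> VV d n" unfolding kA_def by (rule VV_two[OF ab]) (auto simp: y_def)
    have kBV: "kB \<in> VV d n" unfolding kB_def by (rule VV_two[OF ab]) (auto simp: y_def)
    define Q where "Q r = (om d ^ \<alpha>) ^ r (p+1) * (\<Prod>j\<in>M. (om d ^ y j) ^ r j)" for r
    have prM: "(\<Prod>j\<in>M. (om d ^ k j) ^ r j) = (\<Prod>j\<in>M. (om d ^ y j) ^ r j)"
      if "\<And>j. j \<in> M \<Longrightarrow> k j = y j" for k r
      using that by (intro prod.cong) auto
    have chiA: "chi d n kA r = (om d ^ \<alpha>) ^ r p * Q r" if "r \<in> Bp" for r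
    proof -
      have "chi d n kA r = (\<Prod>j\<in>{p..n}. (om d ^ kA j) ^ r j)"
        using that p unfolding Bp_def by (intro chi_low) auto
      also have "\<dots> = (om d ^ kA p) ^ r p * ((om d ^ kA (p+1)) ^ r (p+1) * (\<Prod>j\<in>M. (om d ^ kA j) ^ r j))"
        unfolding ins using nM finM by simp
      also have "\<dots> = (om d ^ \<alpha>) ^ r p * Q r"
        unfolding Q_def using p by (subst prM[of kA]) (auto simp: kA_def M_def)
      finally show ?thesis .
    qed
    have chiB: "chi d n kB r = (om d ^ \<beta>) ^ r p * Q r" if "r \<in> Bp" for r
    proof -
      have "chi d n kB r = (\<Prod>j\<in>{p..n}. (om d ^ kB j) ^ r j)"
        using that p unfolding Bp_def by (intro chi_low) auto
      also have "\<dots> = (om d ^ kB p) ^ r p * ((om d ^ kB (p+1)) ^ r (p+1) * (\<Prod>j\<in>M. (om d ^ kB j) ^ r j))"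
        unfolding ins using nM finM by simp
      also have "\<dots> = (om d ^ \<beta>) ^ r p * Q r"
        unfolding Q_def using p by (subst prM[of kB]) (auto simp: kB_def M_def)
      finally show ?thesis .
    qed
    have "0 = (\<Sum>r\<in>Bp. c r * chi d n kA r) - (\<Sum>r\<in>Bp. c r * chi d n kB r)"
      using vanp[OF kAV] vanp[OF kBV] by simp
    also have "\<dots> = (\<Sum>r\<in>Bp. c r * ((om d ^ \<alpha>) ^ r p - (om d ^ \<beta>) ^ r p) * Q r)"
      unfolding sum_subtractf[symmetric] by (intro sum.cong refl) (simp add: chiA chiB algebra_simps)
    also have "\<dots> = (\<Sum>r\<in>R. c r * ((om d ^ \<alpha>) ^ r p - (om d ^ \<beta>) ^ r p) * Q r)"
      unfolding R_def using finB by (intro sum.mono_neutral_right) (auto simp: Bp_def, metis power_0 neq0_conv)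
    also have "\<dots> = (\<Sum>r\<in>R. c r * ((om d ^ \<alpha>) ^ r p - (om d ^ \<beta>) ^ r p) * (om d ^ \<alpha>) ^ r (p+1)
              * (\<Prod>j\<in>Sr r. if j \<in> T then om d ^ \<beta> else om d ^ \<alpha>))"
    proof (intro sum.cong refl)
      fix r assume r: "r \<in> R"
      have "(\<Prod>j\<in>M. (om d ^ y j) ^ r j) = (\<Prod>j\<in>Sr r. (om d ^ y j) ^ r j)"
      proof (rule prod.mono_neutral_right[OF finM])
        show "Sr r \<subseteq> M" unfolding Sr_def by auto
        show "\<forall>j\<in>M - Sr r. (om d ^ y j) ^ r j = 1"
        proof
          fix j assume j: "j \<in> M - Sr r"
          hence "r j \<le> 1" "r j \<noteq> 1" using R01[OF r] unfolding Sr_def by auto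
          hence "r j = 0" by simp
          thus "(om d ^ y j) ^ r j = 1" by simp
        qed
      qed
      also have "\<dots> = (\<Prod>j\<in>Sr r. if j \<in> T then om d ^ \<beta> else om d ^ \<alpha>)"
        unfolding Sr_def y_def by (intro prod.cong) auto
      finally show "c r * ((om d ^ \<alpha>) ^ r p - (om d ^ \<beta>) ^ r p) * Q r =
         c r * ((om d ^ \<alpha>) ^ r p - (om d ^ \<beta>) ^ r p) * (om d ^ \<alpha>) ^ r (p+1)
              * (\<Prod>j\<in>Sr r. if j \<in> T then om d ^ \<beta> else om d ^ \<alpha>)"
        unfolding Q_def by (simp add: mult_ac)
    qed
    finally show ?thesis by simp
  qed
  have grp: "(\<Sum>r\<in>{r\<in>R. Sr r = S}. c r * ((om d ^ \<alpha>) ^ r p - (om d ^ \<beta>) ^ r p) * (om d ^ \<alpha>) ^ r (p+1)) = 0"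
    if ab: "\<alpha> < d" "\<beta> < d" and S: "S \<subseteq> M" for \<alpha> \<beta> S
  proof (cases "\<alpha> = \<beta>")
    case True thus ?thesis by simp
  next
    case False
    hence uv: "om d ^ \<alpha> \<noteq> om d ^ \<beta>" using om_inj[OF ab] by auto
    define G where "G S = (\<Sum>r\<in>{r\<in>R. Sr r = S}. c r * ((om d ^ \<alpha>) ^ r p - (om d ^ \<beta>) ^ r p) * (om d ^ \<alpha>) ^ r (p+1))" for S
    have "G S = 0"
    proof (rule multilin[OF finM uv _ S])
      fix T assume T: "T \<subseteq> M"
      have "(\<Sum>S\<in>Pow M. G S * (\<Prod>j\<in>S. if j \<in> T then om d ^ \<beta> else om d ^ \<alpha>))
          = (\<Sum>S\<in>Pow M. \<Sum>r\<in>{r\<in>R. Sr r = S}. c r * ((om d ^ \<alpha>) ^ r p - (om d ^ \<beta>) ^ r p) * (om d ^ \<alpha>) ^ r (p+1)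
              * (\<Prod>j\<in>Sr r. if j \<in> T then om d ^ \<beta> else om d ^ \<alpha>))"
        unfolding G_def sum_distrib_right by (intro sum.cong refl) auto
      also have "\<dots> = (\<Sum>r\<in>R. c r * ((om d ^ \<alpha>) ^ r p - (om d ^ \<beta>) ^ r p) * (om d ^ \<alpha>) ^ r (p+1)
              * (\<Prod>j\<in>Sr r. if j \<in> T then om d ^ \<beta> else om d ^ \<alpha>))"
        by (rule sum.group[OF finB(2) finite_Pow_iff[THEN iffD2, OF finM]]) (auto simp: Sr_def)
      also have "\<dots> = 0" by (rule key[OF ab T])
      finally show "(\<Sum>S\<in>Pow M. G S * (\<Prod>j\<in>S. if j \<in> T then om d ^ \<beta> else om d ^ \<alpha>)) = 0" .
    qed
    thus ?thesis unfolding G_def .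
  qed
  define S0 where "S0 = Sr r0"
  define R1' where "R1' = {r\<in>{r\<in>R. Sr r = S0}. r p = r0 p}"
  have S0M: "S0 \<subseteq> M" unfolding S0_def Sr_def by auto
  have r0R: "r0 \<in> R" using r0 unfolding R_def Bp_def B_def by auto
  have r0p: "r0 p < d" using Rlt[OF r0R] p by simp
  have r0p1: "r0 (p+1) < d" using Rlt[OF r0R] p by simp
  have step1: "(\<Sum>r\<in>R1'. c r * (om d ^ \<alpha>) ^ r (p+1)) = 0" if a: "\<alpha> < d" for \<alpha>
  proof -
    have "(\<Sum>r\<in>{r\<in>{r\<in>R. Sr r = S0}. r p = r0 p}. - (c r * (om d ^ \<alpha>) ^ r (p+1))) = 0"
    proof (rule vanish_group0[where K="\<Sum>r\<in>{r\<in>R. Sr r = S0}. c r * (om d ^ \<alpha>) ^ r p * (om d ^ \<alpha>) ^ r (p+1)"])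
      show "finite {r\<in>R. Sr r = S0}" using finB by simp
      show "\<And>r. r \<in> {r\<in>R. Sr r = S0} \<Longrightarrow> r p < d" using Rlt p by auto
      show "r0 p < d" "r0 p \<noteq> 0" using r0p r0 by auto
      fix \<beta> assume b: "\<beta> < d"
      show "(\<Sum>r\<in>{r\<in>R. Sr r = S0}. c r * (om d ^ \<alpha>) ^ r p * (om d ^ \<alpha>) ^ r (p+1)) +
         (\<Sum>r\<in>{r\<in>R. Sr r = S0}. - (c r * (om d ^ \<alpha>) ^ r (p+1)) * (om d ^ \<beta>) ^ r p) = 0"
        using grp[OF a b S0M] by (simp add: sum_subtractf[symmetric] sum_negf[symmetric] sum.distrib[symmetric] algebra_simps)
    qed
    thus ?thesis unfolding R1'_def by (simp add: sum_negf)
  qed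
  have "(\<Sum>r\<in>{r\<in>R1'. r (p+1) = r0 (p+1)}. c r) = 0"
    by (rule vanish_group[OF _ _ step1 r0p1]) (use finB Rlt p in \<open>auto simp: R1'_def\<close>)
  moreover have "{r\<in>R1'. r (p+1) = r0 (p+1)} = {r0}"
  proof
    show "{r0} \<subseteq> {r\<in>R1'. r (p+1) = r0 (p+1)}" using r0R unfolding R1'_def S0_def by auto
    show "{r\<in>R1'. r (p+1) = r0 (p+1)} \<subseteq> {r0}"
    proof
      fix r assume "r \<in> {r\<in>R1'. r (p+1) = r0 (p+1)}"
      hence r: "r \<in> R" "Sr r = Sr r0" "r p = r0 p" "r (p+1) = r0 (p+1)" unfolding R1'_def S0_def by auto
      have "r = r0"
      proof (rule exps_eqI[OF Rexp[OF r(1)] Rexp[OF r0R]])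
        fix j assume j: "1 \<le> j" "j \<le> n"
        have "j < p \<or> j = p \<or> j = p + 1 \<or> j \<in> M" using j unfolding M_def by auto
        then consider "j < p" | "j = p" | "j = p + 1" | "j \<in> M" by blast
        thus "r j = r0 j"
        proof cases
          case 1 thus ?thesis using r(1) r0R j unfolding R_def Bp_def by auto
        next
          case 2 thus ?thesis using r by simp
        next
          case 3 thus ?thesis using r by simp
        next
          case 4
          have "r j \<le> 1" "r0 j \<le> 1" using R01[OF r(1) 4] R01[OF r0R 4] by auto
          moreover have "r j = 1 \<longleftrightarrow> r0 j = 1" using r(2) 4 unfolding Sr_def by blast
          ultimately show ?thesis by (auto simp: le_Suc_eq)
        qed
      qed
      thus "r \<in> {r0}" by simp
    qed
  qed
  ultimately show ?thesis by simp
qed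



lemma F3:
  assumes d2: "d \<ge> 2" and n1: "n \<ge> 1"
    and van: "\<And>k. k \<in> VV d n \<Longrightarrow> (\<Sum>r\<in>Bc d n. c r * chi d n k r) = 0"
    and r0: "r0 \<in> Bc d n"
  shows "c r0 = 0"
proof -
  have P: "1 \<le> p \<Longrightarrow> p \<le> n \<Longrightarrow> (\<forall>r\<in>Bc d n. (\<exists>j. 1 \<le> j \<and> j < p \<and> r j \<noteq> 0) \<longrightarrow> c r = 0)" for p
  proof (induction p)
    case 0 thus ?case by simp
  next
    case (Suc p)
    show ?case
    proof (cases "p = 0")
      case True thus ?thesis by auto
    next
      case False
      hence p: "1 \<le> p" "p < n" using Suc by auto
      have IH: "\<And>r. r \<in> Bc d n \<Longrightarrow> (\<exists>j. 1 \<le> j \<and> j < p \<and> r j \<noteq> 0) \<Longrightarrow> c r = 0"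
        using Suc p by auto
      show ?thesis
      proof (intro ballI impI)
        fix r assume r: "r \<in> Bc d n" "\<exists>j. 1 \<le> j \<and> j < Suc p \<and> r j \<noteq> 0"
        show "c r = 0"
        proof (cases "\<exists>j. 1 \<le> j \<and> j < p \<and> r j \<noteq> 0")
          case True thus ?thesis using IH r by blast
        next
          case False
          hence z: "\<forall>j. 1 \<le> j \<and> j < p \<longrightarrow> r j = 0" by auto
          hence "r p \<noteq> 0" using r(2) by (metis less_SucE)
          thus ?thesis using F3_step[OF d2 p van IH r(1) z] by blast
        qed
      qed
    qed
  qed
  show ?thesis
  proof (cases "\<exists>j. 1 \<le> j \<and> j < n \<and> r0 j \<noteq> 0")
    case True thus ?thesis using P[OF n1 order_refl] r0 by blast
  next
    case False
    define Bn where "Bn = {r\<in>Bc d n. \<forall>j. 1 \<le> j \<and> j < n \<longrightarrow> r j = 0}"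
    have finBn: "finite Bn" unfolding Bn_def by simp
    have r0Bn: "r0 \<in> Bn" using False r0 unfolding Bn_def by auto
    have Bnexp: "r \<in> exps d n" if "r \<in> Bn" for r using that unfolding Bn_def Bc_def by auto
    have Bnlt: "r n < d" if "r \<in> Bn" for r using Bnexp[OF that] n1 unfolding exps_def by auto
    have vn: "(\<Sum>r\<in>Bn. c r * (om d ^ \<alpha>) ^ r n) = 0" if a: "\<alpha> < d" for \<alpha>
    proof -
      define kc where "kc = restrict (\<lambda>_. \<alpha>) {1..n}"
      have kcV: "kc \<in> VV d n" unfolding kc_def by (rule VV_two[OF a a]) simp
      have chi: "chi d n kc r = (om d ^ \<alpha>) ^ r n" if "r \<in> Bn" for r
      proof -
        have "chi d n kc r = (\<Prod>j\<in>{n..n}. (om d ^ kc j) ^ r j)"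
          using that n1 unfolding Bn_def by (intro chi_low) auto
        thus ?thesis using n1 by (simp add: kc_def)
      qed
      have "(\<Sum>r\<in>Bn. c r * (om d ^ \<alpha>) ^ r n) = (\<Sum>r\<in>Bn. c r * chi d n kc r)"
        using chi by simp
      also have "\<dots> = (\<Sum>r\<in>Bc d n. c r * chi d n kc r)"
        unfolding Bn_def using P[OF n1 order_refl] by (intro sum.mono_neutral_left) auto
      also have "\<dots> = 0" by (rule van[OF kcV])
      finally show ?thesis .
    qed
    have "(\<Sum>r\<in>{r\<in>Bn. r n = r0 n}. c r) = 0"
      using vanish_group[where h="\<lambda>r. r n" and f=c and R=Bn and d=d and m="r0 n"] finBn Bnlt vn Bnlt[OF r0Bn] by blast
    moreover have "{r\<in>Bn. r n = r0 n} = {r0}"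
    proof (intro equalityI subsetI)
      fix r assume "r \<in> {r\<in>Bn. r n = r0 n}"
      hence r: "r \<in> Bn" "r n = r0 n" by auto
      have "r = r0"
      proof (rule exps_eqI[OF Bnexp[OF r(1)] Bnexp[OF r0Bn]])
        fix j assume "1 \<le> j" "j \<le> n"
        thus "r j = r0 j" using r r0Bn unfolding Bn_def by (cases "j = n") auto
      qed
      thus "r \<in> {r0}" by simp
    qed (use r0Bn in auto)
    ultimately show ?thesis by simp
  qed
qed



definition scf :: "complex \<Rightarrow> elem \<Rightarrow> elem" where "scf c f = (\<lambda>x. c * f x)"

interpretation vs: vector_space scf
  by unfold_locales (auto simp: scf_def fun_eq_iff algebra_simps)

lemma fsum_apply: "(\<Sum>x\<in>A. (f x :: elem)) k = (\<Sum>x\<in>A. f x k)"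
  by (induction A rule: infinite_finite_induct) auto

definition EE :: "nat \<Rightarrow> nat \<Rightarrow> elem \<Rightarrow> elem" where
  "EE d n a = (\<lambda>k. if k \<in> VV d n then ev d n k a else 0)"

lemma ev_lincomb: "ev d n k (lincomb I c b) = (\<Sum>i\<in>I. c i * ev d n k (b i))"
proof -
  have "ev d n k (lincomb I c b) = (\<Sum>s\<in>exps d n. \<Sum>i\<in>I. c i * (b i s * chi d n k s))"
    unfolding ev_def lincomb_def sum_distrib_right by (intro sum.cong refl) (simp add: mult.assoc)
  also have "\<dots> = (\<Sum>i\<in>I. \<Sum>s\<in>exps d n. c i * (b i s * chi d n k s))" by (rule sum.swap)
  also have "\<dots> = (\<Sum>i\<in>I. c i * ev d n k (b i))" unfolding ev_def sum_distrib_left ..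
  finally show ?thesis .
qed

lemma EE_lincomb: "EE d n (lincomb I c b) = (\<Sum>i\<in>I. scf (c i) (EE d n (b i)))"
proof (rule ext)
  fix k
  show "EE d n (lincomb I c b) k = (\<Sum>i\<in>I. scf (c i) (EE d n (b i))) k"
    unfolding fsum_apply scf_def EE_def
  proof (cases "k \<in> VV d n")
    case True thus "(if k \<in> VV d n then ev d n k (lincomb I c b) else 0) =
      (\<Sum>i\<in>I. c i * (if k \<in> VV d n then ev d n k (b i) else 0))" by (simp only: if_True ev_lincomb)
  next
    case False thus "(if k \<in> VV d n then ev d n k (lincomb I c b) else 0) =
      (\<Sum>i\<in>I. c i * (if k \<in> VV d n then ev d n k (b i) else 0))" by simp
  qed
qed

lemma EE_sub: "EE d n (gsub a b) = EE d n a - EE d n b"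
  by (rule ext) (simp add: EE_def ev_sub)

lemma VV_exps: "VV d n \<subseteq> exps d n" unfolding VV_def by auto

lemma VV_finite[simp]: "finite (VV d n)" by (rule finite_subset[OF VV_exps exps_finite])

lemma mono_app: "mono d n k x = (if x = k then 1 else 0)" by (simp add: mono_def)

lemma sum_delta_mult: "finite A \<Longrightarrow> (\<Sum>k\<in>A. f k * (if x = k then 1 else 0)) = (if x \<in> A then f x else (0::complex))"
proof -
  assume "finite A"
  have "(\<Sum>k\<in>A. f k * (if x = k then 1 else 0)) = (\<Sum>k\<in>A. if x = k then f k else 0)" by (intro sum.cong) auto
  thus ?thesis using \<open>finite A\<close> by simp
qed

lemma EE_span: "EE d n a \<in> vs.span (mono d n ` VV d n)"
proof -
  have "EE d n a = (\<Sum>k\<in>VV d n. scf (EE d n a k) (mono d n k))"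
  proof
    fix x show "EE d n a x = (\<Sum>k\<in>VV d n. scf (EE d n a k) (mono d n k)) x"
      unfolding fsum_apply scf_def mono_app by (simp add: sum_delta_mult) (simp add: EE_def)
  qed
  also have "\<dots> \<in> vs.span (mono d n ` VV d n)"
    by (intro vs.span_sum vs.span_scale vs.span_base) auto
  finally show ?thesis .
qed

lemma mono_inj: "inj (mono d n)"
proof
  fix x y assume "mono d n x = mono d n y"
  hence "mono d n x x = mono d n y x" by simp
  thus "x = y" by (simp add: mono_def split: if_splits)
qed

lemma D_indep: "vs.independent (mono d n ` VV d n)"
proof -
  have "\<not> vs.dependent (mono d n ` VV d n)"
  proof
    assume "vs.dependent (mono d n ` VV d n)"
    then obtain u where u: "\<exists>v\<in>mono d n ` VV d n. u v \<noteq> 0" "(\<Sum>v\<in>mono d n ` VV d n. scf (u v) v) = 0"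
      using vs.dependent_finite by auto
    then obtain k where k: "k \<in> VV d n" "u (mono d n k) \<noteq> 0" by auto
    have "0 = (\<Sum>v\<in>mono d n ` VV d n. scf (u v) v) k" using u(2) by simp
    also have "\<dots> = (\<Sum>k'\<in>VV d n. scf (u (mono d n k')) (mono d n k')) k"
      by (subst sum.reindex) (auto intro: inj_on_subset[OF mono_inj])
    also have "\<dots> = u (mono d n k)" using k(1) unfolding fsum_apply scf_def mono_app
      by (simp add: sum_delta_mult)
    finally show False using k(2) by simp
  qed
  thus ?thesis by simp
qed

lemma card_D: "card (mono d n ` VV d n) = card (VV d n)"
  by (rule card_image) (rule inj_on_subset[OF mono_inj], simp)

lemma EE_idem: assumes "d > 0" "k \<in> VV d n" shows "EE d n (idem d n k) = mono d n k"
proof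
  fix x
  have k: "k \<in> exps d n" using assms(2) VV_exps by auto
  show "EE d n (idem d n k) x = mono d n k x"
  proof (cases "x \<in> VV d n")
    case True hence "x \<in> exps d n" using VV_exps by auto
    thus ?thesis using True by (simp add: EE_def mono_app ev_idem[OF assms(1) k])
  next
    case False thus ?thesis using assms(2) by (auto simp: EE_def mono_app)
  qed
qed

lemma indep_coeff:
  assumes fin: "finite I" and co: "\<And>u. (\<Sum>i\<in>I. scf (u i) (F i)) = 0 \<Longrightarrow> \<forall>i\<in>I. u i = 0"
  shows "inj_on F I" "vs.independent (F ` I)"
proof -
  show inj: "inj_on F I"
  proof
    fix i j assume ij: "i \<in> I" "j \<in> I" "F i = F j"
    show "i = j"
    proof (rule ccontr)
      assume ne: "i \<noteq> j"
      define u where "u x = (if x = i then 1 else if x = j then -1 else (0::complex))" for x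
      have "(\<Sum>x\<in>I. scf (u x) (F x)) = 0"
      proof
        fix k
        have "(\<Sum>x\<in>I. scf (u x) (F x)) k = (\<Sum>x\<in>I. (if x = i then F i k else 0) - (if x = j then F j k else 0))"
          unfolding fsum_apply scf_def u_def using ne by (intro sum.cong refl) auto
        also have "\<dots> = 0" using ij fin by (simp add: sum_subtractf)
        finally show "(\<Sum>x\<in>I. scf (u x) (F x)) k = 0 k" by simp
      qed
      hence "u i = 0" using co ij by blast
      thus False by (simp add: u_def)
    qed
  qed
  show "vs.independent (F ` I)"
  proof -
    have "\<not> vs.dependent (F ` I)"
    proof
      assume "vs.dependent (F ` I)"
      then obtain u where u: "\<exists>v\<in>F ` I. u v \<noteq> 0" "(\<Sum>v\<in>F ` I. scf (u v) v) = 0"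
        using vs.dependent_finite fin by auto
      have "(\<Sum>i\<in>I. scf (u (F i)) (F i)) = 0" using u(2) by (simp add: sum.reindex[OF inj])
      hence "\<forall>i\<in>I. u (F i) = 0" by (rule co)
      thus False using u(1) by auto
    qed
    thus ?thesis by simp
  qed
qed

lemma lincomb_GA: "(\<And>i. i \<in> I \<Longrightarrow> b i \<in> GA d n) \<Longrightarrow> lincomb I c b \<in> GA d n"
  unfolding GA_def lincomb_def by auto

lemma EE_zero_R1: assumes "d \<ge> 2" "a \<in> GA d n" "EE d n a = 0" shows "a \<in> R1 d n"
proof (rule F2[OF assms(1,2)])
  fix k assume k: "k \<in> VV d n"
  have "EE d n a k = 0" using assms(3) by simp
  thus "ev d n k a = 0" using k by (simp add: EE_def)
qed

lemma R1_EE: "d \<ge> 2 \<Longrightarrow> a \<in> R1 d n \<Longrightarrow> EE d n a = 0"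
  by (auto simp: EE_def fun_eq_iff F1)

lemma basis_card:
  assumes d2: "d \<ge> 2" and qb: "quot_basis (GA d n) (R1 d n) I b"
  shows "card I = card (VV d n)"
proof -
  have d0: "d > 0" using d2 by simp
  have fin: "finite I" and bGA: "\<And>i. i \<in> I \<Longrightarrow> b i \<in> GA d n"
    and sp: "\<And>a. a \<in> GA d n \<Longrightarrow> \<exists>c. gsub a (lincomb I c b) \<in> R1 d n"
    and ind: "\<And>c. lincomb I c b \<in> R1 d n \<Longrightarrow> \<forall>i\<in>I. c i = 0"
    using qb unfolding quot_basis_def by auto
  define F where "F i = EE d n (b i)" for i
  have co: "\<forall>i\<in>I. u i = 0" if "(\<Sum>i\<in>I. scf (u i) (F i)) = 0" for u
  proof -
    have "EE d n (lincomb I u b) = (\<Sum>i\<in>I. scf (u i) (F i))" unfolding F_def by (rule EE_lincomb)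
    also have "\<dots> = 0" by (rule that)
    finally have "EE d n (lincomb I u b) = 0" .
    moreover have lg: "lincomb I u b \<in> GA d n" by (rule lincomb_GA) (rule bGA)
    ultimately have "lincomb I u b \<in> R1 d n" using EE_zero_R1[OF d2] by blast
    thus ?thesis by (rule ind)
  qed
  note ic = indep_coeff[OF fin co]
  let ?D = "mono d n ` VV d n"
  have FD: "F ` I \<subseteq> vs.span ?D" unfolding F_def using EE_span by auto
  have DF: "?D \<subseteq> vs.span (F ` I)"
  proof
    fix x assume "x \<in> ?D"
    then obtain k where k: "k \<in> VV d n" "x = mono d n k" by auto
    obtain c where c: "gsub (idem d n k) (lincomb I c b) \<in> R1 d n" using sp[OF idem_GA] by blast
    have "EE d n (idem d n k) - EE d n (lincomb I c b) = 0"
      using R1_EE[OF d2 c] by (simp add: EE_sub)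
    hence "x = EE d n (lincomb I c b)" using k EE_idem[OF d0 k(1)] by simp
    also have "\<dots> = (\<Sum>i\<in>I. scf (c i) (F i))" unfolding F_def by (simp only: EE_lincomb)
    also have "\<dots> \<in> vs.span (F ` I)" by (intro vs.span_sum vs.span_scale vs.span_base) auto
    finally show "x \<in> vs.span (F ` I)" .
  qed
  have "card (F ` I) \<le> card ?D" using vs.independent_span_bound[OF _ ic(2) FD] by simp
  moreover have "card ?D \<le> card (F ` I)" using vs.independent_span_bound[OF _ D_indep DF] fin by simp
  ultimately have "card (F ` I) = card ?D" by simp
  thus ?thesis using card_image[OF ic(1)] card_D by simp
qed

lemma Bc_basis:
  assumes d2: "d \<ge> 2" and n1: "n \<ge> 1" and cardle: "card (VV d n) \<le> card (Bc d n)"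
  shows "quot_basis (GA d n) (R1 d n) (Bc d n) (mono d n)"
proof -
  have d0: "d > 0" using d2 by simp
  have Bexp: "Bc d n \<subseteq> exps d n" unfolding Bc_def by auto
  have monoGA: "mono d n r \<in> GA d n" if "r \<in> Bc d n" for r
    using that Bexp unfolding GA_def mono_def by auto
  define F where "F r = EE d n (mono d n r)" for r
  have Fk: "F r k = chi d n k r" if "r \<in> Bc d n" "k \<in> VV d n" for r k
    using that Bexp unfolding F_def EE_def by (auto simp: ev_mono)
  have co: "\<forall>r\<in>Bc d n. u r = 0" if "(\<Sum>r\<in>Bc d n. scf (u r) (F r)) = 0" for u
  proof
    fix r0 assume r0: "r0 \<in> Bc d n"
    show "u r0 = 0"
    proof (rule F3[OF d2 n1 _ r0])
      fix k assume k: "k \<in> VV d n"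
      have "(\<Sum>r\<in>Bc d n. u r * chi d n k r) = (\<Sum>r\<in>Bc d n. scf (u r) (F r)) k"
        unfolding fsum_apply scf_def using Fk k by simp
      thus "(\<Sum>r\<in>Bc d n. u r * chi d n k r) = 0" using that by simp
    qed
  qed
  note ic = indep_coeff[OF Bc_finite co]
  let ?D = "mono d n ` VV d n"
  let ?FB = "F ` Bc d n"
  have FD: "?FB \<subseteq> vs.span ?D" unfolding F_def using EE_span by auto
  have DF: "?D \<subseteq> vs.span ?FB"
  proof
    fix x assume x: "x \<in> ?D"
    show "x \<in> vs.span ?FB"
    proof (rule ccontr)
      assume nx: "x \<notin> vs.span ?FB"
      have "vs.independent (insert x ?FB)" by (rule vs.independent_insertI[OF nx ic(2)])
      moreover have "insert x ?FB \<subseteq> vs.span ?D" using FD x vs.span_base by auto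
      ultimately have "card (insert x ?FB) \<le> card ?D" using vs.independent_span_bound[of ?D "insert x ?FB"] by simp
      moreover have "card (insert x ?FB) = card (Bc d n) + 1"
      proof -
        have "x \<notin> ?FB" using nx vs.span_base by blast
        hence "card (insert x ?FB) = card ?FB + 1" by simp
        thus ?thesis using card_image[OF ic(1)] by simp
      qed
      ultimately show False using card_D cardle by simp
    qed
  qed
  have spanall: "EE d n a \<in> vs.span ?FB" for a
  proof -
    have "vs.span ?D \<subseteq> vs.span ?FB" using vs.span_mono[OF DF] by (simp add: vs.span_span)
    thus ?thesis using EE_span by blast
  qed
  show ?thesis unfolding quot_basis_def
  proof (intro conjI ballI allI impI)
    show "finite (Bc d n)" by simp
    show "\<And>r. r \<in> Bc d n \<Longrightarrow> mono d n r \<in> GA d n" by (rule monoGA)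
  next
    fix a assume a: "a \<in> GA d n"
    obtain u where u: "EE d n a = (\<Sum>v\<in>?FB. scf (u v) v)"
      using spanall[of a] vs.span_finite[of ?FB] by auto
    have "EE d n a = (\<Sum>r\<in>Bc d n. scf (u (F r)) (F r))" using u by (simp add: sum.reindex[OF ic(1)])
    also have "\<dots> = EE d n (lincomb (Bc d n) (\<lambda>r. u (F r)) (mono d n))"
      unfolding F_def by (simp only: EE_lincomb)
    finally have "EE d n (gsub a (lincomb (Bc d n) (\<lambda>r. u (F r)) (mono d n))) = 0"
      by (simp add: EE_sub)
    moreover have "gsub a (lincomb (Bc d n) (\<lambda>r. u (F r)) (mono d n)) \<in> GA d n"
      using a lincomb_GA[of "Bc d n" "mono d n", OF monoGA] by (auto simp: GA_def gsub_def)
    ultimately have "gsub a (lincomb (Bc d n) (\<lambda>r. u (F r)) (mono d n)) \<in> R1 d n"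
      using EE_zero_R1[OF d2] by blast
    thus "\<exists>c. gsub a (lincomb (Bc d n) c (mono d n)) \<in> R1 d n" by blast
  next
    fix c r assume c: "lincomb (Bc d n) c (mono d n) \<in> R1 d n" and r: "r \<in> Bc d n"
    have "(\<Sum>r\<in>Bc d n. scf (c r) (F r)) = EE d n (lincomb (Bc d n) c (mono d n))"
      unfolding F_def by (simp only: EE_lincomb)
    also have "\<dots> = 0" by (rule R1_EE[OF d2 c])
    finally show "c r = 0" using co r by blast
  qed
qed



lemma Bset_sub: assumes d2: "d \<ge> 2" shows "Bset d n \<subseteq> Bc d n"
proof
  fix r assume "r \<in> Bset d n"
  then consider (A) i a b \<epsilon> where "r = restrict (\<lambda>j. if j = i then a else if j = i + 1 then b
                     else if j \<ge> i + 2 then \<epsilon> j else 0) {1..n}"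
       "1 \<le> i" "i < n" "1 \<le> a" "a < d" "b < d" "\<forall>j. \<epsilon> j \<in> {0, 1}"
    | (B) b where "r = restrict (\<lambda>j. if j = n then b else 0) {1..n}" "b < d"
    unfolding Bset_def by blast
  thus "r \<in> Bc d n"
  proof cases
    case A
    have e: "\<epsilon> j \<le> 1" for j using A(7) by (metis insertE le_less_linear less_one not_one_le_zero singletonD zero_le_one)
    have "r \<in> exps d n" unfolding A(1) exps_def using A d2 e by (auto simp: le_less_trans[OF e])
    moreover have "r k \<le> 1" if "1 \<le> i'" "i' + 2 \<le> k" "k \<le> n" "1 \<le> r i'" for i' k
    proof -
      have "i' \<ge> i" using that A(1) by (auto split: if_splits)
      thus ?thesis using that A(1) e by auto
    qed
    ultimately show ?thesis unfolding Bc_def by blast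
  next
    case B
    have "r \<in> exps d n" unfolding B(1) exps_def using B d2 by auto
    moreover have "r k \<le> 1" if "1 \<le> i'" "i' + 2 \<le> k" "k \<le> n" "1 \<le> r i'" for i' k
    proof -
      have "i' = n" using that B(1) by (auto split: if_splits)
      thus ?thesis using that by auto
    qed
    ultimately show ?thesis unfolding Bc_def by blast
  qed
qed

lemma Bset_sup: assumes n1: "n \<ge> 1" shows "Bc d n \<subseteq> Bset d n"
proof
  fix r assume r: "r \<in> Bc d n"
  have re: "r \<in> exps d n" and rc: "\<And>i k. 1 \<le> i \<Longrightarrow> i + 2 \<le> k \<Longrightarrow> k \<le> n \<Longrightarrow> 1 \<le> r i \<Longrightarrow> r k \<le> 1"
    using r unfolding Bc_def by auto
  have rlt: "r j < d" if "1 \<le> j" "j \<le> n" for j using re that unfolding exps_def by auto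
  show "r \<in> Bset d n"
  proof (cases "\<exists>j. 1 \<le> j \<and> j < n \<and> r j \<noteq> 0")
    case True
    define i where "i = (LEAST j. 1 \<le> j \<and> j < n \<and> r j \<noteq> 0)"
    have i: "1 \<le> i" "i < n" "r i \<noteq> 0" using LeastI_ex[OF True] unfolding i_def by auto
    have below: "r j = 0" if "1 \<le> j" "j < i" for j
      using not_less_Least[of j "\<lambda>j. 1 \<le> j \<and> j < n \<and> r j \<noteq> 0"] that i unfolding i_def by auto
    define \<epsilon> where "\<epsilon> j = (if r j \<le> 1 then r j else 0)" for j
    have eps: "\<forall>j. \<epsilon> j \<in> {0, 1}" unfolding \<epsilon>_def by (auto simp: le_Suc_eq)
    have "r = restrict (\<lambda>j. if j = i then r i else if j = i + 1 then r (i+1)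
                     else if j \<ge> i + 2 then \<epsilon> j else 0) {1..n}"
    proof (rule exps_eqI[OF re])
      show "restrict (\<lambda>j. if j = i then r i else if j = i + 1 then r (i+1)
                     else if j \<ge> i + 2 then \<epsilon> j else 0) {1..n} \<in> exps d n"
      proof -
        have "0 < d" using rlt[of i] i by auto
        thus ?thesis unfolding exps_def \<epsilon>_def using rlt i by auto
      qed
      fix j assume j: "1 \<le> j" "j \<le> n"
      show "r j = restrict (\<lambda>j. if j = i then r i else if j = i + 1 then r (i+1)
                     else if j \<ge> i + 2 then \<epsilon> j else 0) {1..n} j"
        using j below[of j] rc[of i j] i unfolding \<epsilon>_def by auto
    qed
    moreover have "1 \<le> r i" "r i < d" "r (i+1) < d" using i rlt by auto
    ultimately show ?thesis unfolding Bset_def using i eps by blast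
  next
    case False
    have "r = restrict (\<lambda>j. if j = n then r n else 0) {1..n}"
    proof (rule exps_eqI[OF re])
      show "restrict (\<lambda>j. if j = n then r n else 0) {1..n} \<in> exps d n"
        unfolding exps_def using rlt[of n] n1 by auto
      fix j assume "1 \<le> j" "j \<le> n"
      thus "r j = restrict (\<lambda>j. if j = n then r n else 0) {1..n} j" using False by auto
    qed
    moreover have "r n < d" using rlt[of n] n1 by simp
    ultimately show ?thesis unfolding Bset_def by blast
  qed
qed

lemma Bset_Bc: "d \<ge> 2 \<Longrightarrow> n \<ge> 1 \<Longrightarrow> Bset d n = Bc d n"
  using Bset_sub Bset_sup by blast

lemma Bc_d2: "Bc 2 n = exps 2 n"
proof -
  have "r k \<le> 1" if "r \<in> exps 2 n" "1 \<le> k" "k \<le> n" for r k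
  proof -
    have "r k < 2" using that unfolding exps_def by auto
    thus ?thesis by simp
  qed
  thus ?thesis unfolding Bc_def by auto
qed

lemma mdvd_xixk2: assumes "1 \<le> i" "i < k" "k \<le> n"
  shows "mdvd n (xixk2 n i k) r \<longleftrightarrow> 1 \<le> r i \<and> 2 \<le> r k"
proof
  assume "mdvd n (xixk2 n i k) r"
  hence "xixk2 n i k i \<le> r i" "xixk2 n i k k \<le> r k" using assms unfolding mdvd_def by auto
  thus "1 \<le> r i \<and> 2 \<le> r k" using assms unfolding xixk2_def by auto
next
  assume "1 \<le> r i \<and> 2 \<le> r k"
  thus "mdvd n (xixk2 n i k) r" using assms unfolding mdvd_def xixk2_def by auto
qed

lemma Bc_char: "Bc d n = {r \<in> exps d n. \<not> (\<exists>i k. 1 \<le> i \<and> i < k \<and> k \<le> n \<and> k - i \<ge> 2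
                                                   \<and> mdvd n (xixk2 n i k) r)}"
proof -
  have "(\<exists>i k. 1 \<le> i \<and> i < k \<and> k \<le> n \<and> k - i \<ge> 2 \<and> mdvd n (xixk2 n i k) r)
     \<longleftrightarrow> (\<exists>i k. 1 \<le> i \<and> i + 2 \<le> k \<and> k \<le> n \<and> 1 \<le> r i \<and> \<not> r k \<le> 1)" for r
  proof
    assume "\<exists>i k. 1 \<le> i \<and> i < k \<and> k \<le> n \<and> k - i \<ge> 2 \<and> mdvd n (xixk2 n i k) r"
    then obtain i k where "1 \<le> i" "i < k" "k \<le> n" "k - i \<ge> 2" "mdvd n (xixk2 n i k) r" by blast
    thus "\<exists>i k. 1 \<le> i \<and> i + 2 \<le> k \<and> k \<le> n \<and> 1 \<le> r i \<and> \<not> r k \<le> 1"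
      using mdvd_xixk2 by (metis add.commute le_diff_conv2 less_imp_le not_less_eq_eq one_add_one plus_1_eq_Suc)
  next
    assume "\<exists>i k. 1 \<le> i \<and> i + 2 \<le> k \<and> k \<le> n \<and> 1 \<le> r i \<and> \<not> r k \<le> 1"
    then obtain i k where ik: "1 \<le> i" "i + 2 \<le> k" "k \<le> n" "1 \<le> r i" "\<not> r k \<le> 1" by blast
    hence "mdvd n (xixk2 n i k) r" using mdvd_xixk2[of i k n r] by auto
    thus "\<exists>i k. 1 \<le> i \<and> i < k \<and> k \<le> n \<and> k - i \<ge> 2 \<and> mdvd n (xixk2 n i k) r"
      using ik by (intro exI[of _ i] exI[of _ k]) auto
  qed
  thus ?thesis unfolding Bc_def by blast
qed



definition Cp :: "nat \<Rightarrow> nat \<Rightarrow> nat \<Rightarrow> (nat \<Rightarrow> nat) set" where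
  "Cp d n p = {r \<in> Bc d n. \<forall>j. 1 \<le> j \<and> j < p \<longrightarrow> r j = 0}"

definition Dp :: "nat \<Rightarrow> nat \<Rightarrow> nat \<Rightarrow> (nat \<Rightarrow> nat) set" where
  "Dp d n p = {r \<in> Cp d n p. r p \<noteq> 0}"

definition gmap :: "nat \<Rightarrow> nat \<Rightarrow> nat \<times> nat \<times> nat set \<Rightarrow> (nat \<Rightarrow> nat)" where
  "gmap n p x = (case x of (a, b, S) \<Rightarrow>
     restrict (\<lambda>j. if j = p then a else if j = p + 1 then b else if j \<in> S then 1 else 0) {1..n})"

lemma card_Dp: assumes d2: "d \<ge> 2" and p: "1 \<le> p" "p < n"
  shows "card (Dp d n p) = (d - 1) * d * 2 ^ (n - p - 1)"
proof -
  define M where "M = {p+2..n}"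
  define X where "X = {1..<d} \<times> {..<d} \<times> Pow M"
  have img: "gmap n p ` X = Dp d n p"
  proof (intro equalityI subsetI)
    fix r assume "r \<in> gmap n p ` X"
    then obtain a b S where x: "a \<in> {1..<d}" "b < d" "S \<subseteq> M" and r: "r = gmap n p (a, b, S)"
      unfolding X_def by auto
    have rv: "r j = (if j = p then a else if j = p + 1 then b else if j \<in> S then 1 else 0)" if "1 \<le> j" "j \<le> n" for j
      using r that unfolding gmap_def by simp
    have re: "r \<in> exps d n" unfolding r gmap_def exps_def using x d2 by auto
    have "r k \<le> 1" if "1 \<le> i" "i + 2 \<le> k" "k \<le> n" "1 \<le> r i" for i k
    proof -
      have "r i \<noteq> 0" using that by simp
      hence "i \<ge> p" using rv[of i] that x(3) unfolding M_def by (auto split: if_splits)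
      thus ?thesis using rv[of k] that by auto
    qed
    hence "r \<in> Bc d n" using re unfolding Bc_def by blast
    moreover have "r j = 0" if "1 \<le> j" "j < p" for j using rv[of j] that p x(3) unfolding M_def by auto
    moreover have "r p \<noteq> 0" using rv[of p] p x by auto
    ultimately show "r \<in> Dp d n p" unfolding Dp_def Cp_def by blast
  next
    fix r assume r: "r \<in> Dp d n p"
    have rB: "r \<in> Bc d n" and z: "\<forall>j. 1 \<le> j \<and> j < p \<longrightarrow> r j = 0" and rp: "r p \<noteq> 0"
      using r unfolding Dp_def Cp_def by auto
    have re: "r \<in> exps d n" using rB unfolding Bc_def by auto
    have rlt: "r j < d" if "1 \<le> j" "j \<le> n" for j using re that unfolding exps_def by auto
    have r1: "r j \<le> 1" if "j \<in> M" for j using rB that p rp unfolding Bc_def M_def by auto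
    define S where "S = {j\<in>M. r j = 1}"
    have "r = gmap n p (r p, r (p+1), S)"
    proof (rule exps_eqI[OF re])
      show "gmap n p (r p, r (p+1), S) \<in> exps d n"
        unfolding gmap_def exps_def using rlt p d2 by auto
      fix j assume j: "1 \<le> j" "j \<le> n"
      have "j < p \<or> j = p \<or> j = p + 1 \<or> j \<in> M" using j unfolding M_def by auto
      thus "r j = gmap n p (r p, r (p+1), S) j"
        using j z r1[of j] unfolding gmap_def S_def M_def by (auto simp: le_Suc_eq)
    qed
    moreover have "(r p, r (p+1), S) \<in> X" unfolding X_def S_def using rp rlt p by auto
    ultimately show "r \<in> gmap n p ` X" by blast
  qed
  have inj: "inj_on (gmap n p) X"
  proof
    fix x y assume xy: "x \<in> X" "y \<in> X" "gmap n p x = gmap n p y"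
    obtain a b S where x: "x = (a, b, S)" by (cases x) auto
    obtain a' b' S' where y: "y = (a', b', S')" by (cases y) auto
    have SM: "S \<subseteq> M" "S' \<subseteq> M" using xy x y unfolding X_def by auto
    have "gmap n p x p = gmap n p y p" "gmap n p x (p+1) = gmap n p y (p+1)"
      by (rule fun_cong[OF xy(3)])+
    hence ab: "a = a'" "b = b'" using p unfolding x y gmap_def by auto
    have gv: "gmap n p (a, b, S) j = (if j \<in> S then 1 else 0)" "gmap n p (a', b', S') j = (if j \<in> S' then 1 else 0)"
      if "j \<in> M" for j using that p unfolding gmap_def M_def by auto
    have "(j \<in> S) = (j \<in> S')" if "j \<in> M" for j
    proof -
      have "gmap n p x j = gmap n p y j" by (rule fun_cong[OF xy(3)])
      hence "(if j \<in> S then 1 else 0 :: nat) = (if j \<in> S' then 1 else 0)" unfolding x y gv[OF that] .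
      thus ?thesis by (cases "j \<in> S"; cases "j \<in> S'") simp_all
    qed
    hence "S = S'" using SM by blast
    thus "x = y" using ab x y by simp
  qed
  have "card (Dp d n p) = card X" using card_image[OF inj] img by simp
  also have "\<dots> = (d - 1) * d * 2 ^ (n - p - 1)"
    unfolding X_def M_def by (simp add: card_cartesian_product card_Pow)
  finally show ?thesis .
qed

lemma Cp_split: assumes "1 \<le> p" shows "Cp d n p = Cp d n (p+1) \<union> Dp d n p" "Cp d n (p+1) \<inter> Dp d n p = {}"
proof -
  show "Cp d n p = Cp d n (p+1) \<union> Dp d n p"
    unfolding Cp_def Dp_def using assms by (auto simp: less_Suc_eq)
  show "Cp d n (p+1) \<inter> Dp d n p = {}"
    unfolding Cp_def Dp_def using assms by auto
qed

lemma card_Cn: assumes d2: "d \<ge> 2" and n1: "n \<ge> 1" shows "card (Cp d n n) = d"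
proof -
  define h where "h b = restrict (\<lambda>j. if j = n then b else (0::nat)) {1..n}" for b
  have "Cp d n n = h ` {..<d}"
  proof (intro equalityI subsetI)
    fix r assume r: "r \<in> Cp d n n"
    hence re: "r \<in> exps d n" and z: "\<forall>j. 1 \<le> j \<and> j < n \<longrightarrow> r j = 0" unfolding Cp_def Bc_def by auto
    have "r = h (r n)"
    proof (rule exps_eqI[OF re])
      show "h (r n) \<in> exps d n" using re n1 d2 unfolding h_def exps_def by auto
      fix j assume "1 \<le> j" "j \<le> n" thus "r j = h (r n) j" using z unfolding h_def by auto
    qed
    moreover have "r n < d" using re n1 unfolding exps_def by auto
    ultimately show "r \<in> h ` {..<d}" by blast
  next
    fix r assume "r \<in> h ` {..<d}"
    then obtain b where b: "b < d" "r = h b" by auto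
    have "r \<in> exps d n" using b d2 unfolding h_def exps_def by auto
    moreover have "r k \<le> 1" if "1 \<le> i" "i + 2 \<le> k" "k \<le> n" "1 \<le> r i" for i k
      using that b unfolding h_def by (auto split: if_splits)
    moreover have "r j = 0" if "1 \<le> j" "j < n" for j using that b unfolding h_def by auto
    ultimately show "r \<in> Cp d n n" unfolding Cp_def Bc_def by blast
  qed
  moreover have "inj_on h {..<d}"
  proof
    fix x y assume "h x = h y"
    hence "h x n = h y n" by simp
    thus "x = y" using n1 unfolding h_def by simp
  qed
  ultimately show ?thesis by (simp add: card_image)
qed

lemma card_Cp: assumes d2: "d \<ge> 2" and n1: "n \<ge> 1"
  shows "q < n \<Longrightarrow> card (Cp d n (n - q)) = d + (d - 1) * d * (2 ^ q - 1)"
proof (induction q)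
  case 0 thus ?case using card_Cn[OF d2 n1] by simp
next
  case (Suc q)
  define p where "p = n - Suc q"
  have p: "1 \<le> p" "p < n" "p + 1 = n - q" using Suc.prems unfolding p_def by auto
  have fin: "finite (Cp d n (p+1))" "finite (Dp d n p)" unfolding Cp_def Dp_def by auto
  have "card (Cp d n p) = card (Cp d n (p+1)) + card (Dp d n p)"
    using Cp_split[OF p(1)] fin by (simp add: card_Un_disjoint)
  also have "\<dots> = d + (d - 1) * d * (2 ^ q - 1) + (d - 1) * d * 2 ^ q"
    using Suc.IH Suc.prems p card_Dp[OF d2 p(1,2)] by (simp add: p(3))
  also have "\<dots> = d + (d - 1) * d * (2 ^ Suc q - 1)"
  proof -
    have "(1::nat) \<le> 2 ^ q" by simp
    hence "2 ^ q - 1 + 2 ^ q = 2 ^ Suc q - (1::nat)" by simp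
    hence "(d - 1) * d * (2 ^ q - 1) + (d - 1) * d * 2 ^ q = (d - 1) * d * (2 ^ Suc q - 1)"
      by (metis distrib_left)
    thus ?thesis by simp
  qed
  finally show ?case unfolding p_def .
qed

lemma card_Bc: assumes d2: "d \<ge> 2" and n1: "n \<ge> 1"
  shows "int (card (Bc d n)) = (2 ^ (n - 1) - 1) * (int d) ^ 2 - (2 ^ (n - 1) - 2) * int d"
proof -
  have "Bc d n = Cp d n (n - (n - 1))" using n1 unfolding Cp_def by auto
  hence c: "card (Bc d n) = d + (d - 1) * d * (2 ^ (n - 1) - 1)" using card_Cp[OF d2 n1, of "n - 1"] n1 by simp
  have p1: "(1::nat) \<le> 2 ^ (n - 1)" by simp
  have "int (card (Bc d n)) = int d + (int d - 1) * int d * (2 ^ (n - 1) - 1)"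
    unfolding c using d2 p1 by (simp add: of_nat_diff)
  also have "\<dots> = (2 ^ (n - 1) - 1) * (int d) ^ 2 - (2 ^ (n - 1) - 2) * int d"
    by (simp add: algebra_simps power2_eq_square)
  finally show ?thesis .
qed



definition mk :: "nat \<Rightarrow> (nat \<Rightarrow> nat) \<Rightarrow> nat" where
  "mk n k = (LEAST j. 1 < j \<and> j \<le> n \<and> k j \<noteq> k 1)"

definition Psi :: "nat \<Rightarrow> nat \<Rightarrow> (nat \<Rightarrow> nat) \<Rightarrow> (nat \<Rightarrow> nat)" where
  "Psi d n k = (if \<exists>j. 1 < j \<and> j \<le> n \<and> k j \<noteq> k 1 then
      restrict (\<lambda>j. if j + 1 = mk n k then (k (mk n k) + d - k 1) mod d else if j = mk n k then k 1
                    else if mk n k < j then (if k j = k 1 then 0 else 1) else 0) {1..n}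
    else restrict (\<lambda>j. if j = n then k 1 else 0) {1..n})"

definition fi :: "nat \<Rightarrow> (nat \<Rightarrow> nat) \<Rightarrow> nat" where
  "fi n r = (LEAST j. 1 \<le> j \<and> j < n \<and> r j \<noteq> 0)"

definition Phi :: "nat \<Rightarrow> nat \<Rightarrow> (nat \<Rightarrow> nat) \<Rightarrow> (nat \<Rightarrow> nat)" where
  "Phi d n r = (if \<exists>j. 1 \<le> j \<and> j < n \<and> r j \<noteq> 0 then
      restrict (\<lambda>j. if j \<le> fi n r then r (fi n r + 1) else if j = fi n r + 1 then (r (fi n r) + r (fi n r + 1)) mod d
                    else if r j = 0 then r (fi n r + 1) else (r (fi n r) + r (fi n r + 1)) mod d) {1..n}
    else restrict (\<lambda>j. r n) {1..n})"

lemma modinv: fixes a b d :: nat assumes "a < d" "b < d" shows "((a + d - b) mod d + b) mod d = a"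
proof -
  have "((a + d - b) mod d + b) mod d = (a + d - b + b) mod d" by (rule mod_add_left_eq)
  also have "a + d - b + b = a + d" using assms by simp
  finally show ?thesis using assms by simp
qed

lemma modnz: fixes a b d :: nat assumes "a < d" "b < d" "a \<noteq> b" shows "(a + d - b) mod d \<noteq> 0"
proof
  assume "(a + d - b) mod d = 0"
  hence "((a + d - b) mod d + b) mod d = b mod d" by simp
  thus False using modinv[OF assms(1,2)] assms by simp
qed

lemma Psi_props:
  assumes d2: "d \<ge> 2" and n1: "n \<ge> 1" and k: "k \<in> VV d n"
  shows "Psi d n k \<in> Bc d n \<and> Phi d n (Psi d n k) = k"
proof -
  have ke: "k \<in> exps d n" using k unfolding VV_def by auto
  have klt: "k j < d" if "1 \<le> j" "j \<le> n" for j using ke that unfolding exps_def by auto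
  have kV: "k i = k j \<or> k i = k l \<or> k j = k l" if "1 \<le> i" "i < j" "j < l" "l \<le> n" for i j l
    using k that unfolding VV_def by blast
  let ?r = "Psi d n k"
  show ?thesis
  proof (cases "\<exists>j. 1 < j \<and> j \<le> n \<and> k j \<noteq> k 1")
    case True
    define m where "m = mk n k"
    have m: "1 < m" "m \<le> n" "k m \<noteq> k 1" using LeastI_ex[OF True] unfolding m_def mk_def by auto
    have bel: "k j = k 1" if "1 \<le> j" "j < m" for j
    proof (cases "j = 1")
      case False thus ?thesis using not_less_Least[of j "\<lambda>j. 1 < j \<and> j \<le> n \<and> k j \<noteq> k 1"] that m
        unfolding m_def mk_def by auto
    qed simp
    have rdef: "?r = restrict (\<lambda>j. if j + 1 = m then (k m + d - k 1) mod d else if j = m then k 1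
                    else if m < j then (if k j = k 1 then 0 else 1) else 0) {1..n}"
      unfolding Psi_def m_def using True by simp
    have k1: "k 1 < d" "k m < d" using klt n1 m by auto
    have rv: "?r j = (if j + 1 = m then (k m + d - k 1) mod d else if j = m then k 1
                    else if m < j then (if k j = k 1 then 0 else 1) else 0)" if "1 \<le> j" "j \<le> n" for j
      using that rdef by simp
    have re: "?r \<in> exps d n" unfolding rdef exps_def using d2 k1 by auto
    have rB: "?r \<in> Bc d n"
    proof -
      have "?r k' \<le> 1" if "1 \<le> i'" "i' + 2 \<le> k'" "k' \<le> n" "1 \<le> ?r i'" for i' k'
      proof -
        have "?r i' \<noteq> 0" using that by simp
        hence "m \<le> i' + 1" using rv[of i'] that by (auto split: if_splits)
        thus ?thesis using rv[of k'] that by auto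
      qed
      thus ?thesis using re unfolding Bc_def by blast
    qed
    define i where "i = m - 1"
    have i: "1 \<le> i" "i < n" "i + 1 = m" using m unfolding i_def by auto
    have ri: "?r i \<noteq> 0" using rv[of i] i modnz[OF k1(2) k1(1) m(3)] by simp
    have r0: "?r j = 0" if "1 \<le> j" "j < i" for j using rv[of j] that i by auto
    have ex: "\<exists>j. 1 \<le> j \<and> j < n \<and> ?r j \<noteq> 0" using i ri by blast
    have fi: "fi n ?r = i" unfolding fi_def
    proof (rule Least_equality)
      show "1 \<le> i \<and> i < n \<and> ?r i \<noteq> 0" using i ri by simp
      fix y assume "1 \<le> y \<and> y < n \<and> ?r y \<noteq> 0"
      thus "i \<le> y" using r0[of y] by (meson not_le)
    qed
    have u: "?r (i + 1) = k 1" using rv[of m] i m by simp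
    have v: "(?r i + ?r (i + 1)) mod d = k m" using rv[of i] i u modinv[OF k1(2) k1(1)] by simp
    have "Phi d n ?r = restrict (\<lambda>j. if j \<le> i then k 1 else if j = i + 1 then k m
                    else if ?r j = 0 then k 1 else k m) {1..n}"
      using v unfolding u by (simp only: Phi_def if_P[OF ex] fi u)
    also have "\<dots> = k"
    proof (rule exps_eqI[OF _ ke])
      show "restrict (\<lambda>j. if j \<le> i then k 1 else if j = i + 1 then k m
                    else if ?r j = 0 then k 1 else k m) {1..n} \<in> exps d n"
        unfolding exps_def using k1 by auto
      fix j assume j: "1 \<le> j" "j \<le> n"
      show "restrict (\<lambda>j. if j \<le> i then k 1 else if j = i + 1 then k m
                    else if ?r j = 0 then k 1 else k m) {1..n} j = k j"
      proof (cases "j \<le> i")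
        case True thus ?thesis using j bel[of j] i by auto
      next
        case False
        show ?thesis
        proof (cases "j = m")
          case True thus ?thesis using j i by auto
        next
          case jm: False
          hence mj: "m < j" using False i by auto
          have rj: "?r j = (if k j = k 1 then 0 else 1)" using rv[OF j] mj by auto
          show ?thesis
          proof (cases "k j = k 1")
            case True thus ?thesis using j rj False i by auto
          next
            case kj: False
            have km: "k m = k j" using kV[of 1 m j] m mj j kj by auto
            have "?r j \<noteq> 0" using rj kj by simp
            moreover have "j \<noteq> i + 1" using jm i by simp
            ultimately show ?thesis using j False km by simp
          qed
        qed
      qed
    qed
    finally show ?thesis using rB by simp
  next
    case False
    have rdef: "?r = restrict (\<lambda>j. if j = n then k 1 else 0) {1..n}"
      by (simp only: Psi_def if_not_P[OF False])
    have k1: "k 1 < d" using klt n1 by auto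
    have re: "?r \<in> exps d n" unfolding rdef exps_def using d2 k1 by auto
    have rB: "?r \<in> Bc d n"
    proof -
      have "?r k' \<le> 1" if "1 \<le> i'" "i' + 2 \<le> k'" "k' \<le> n" "1 \<le> ?r i'" for i' k'
        using that rdef by (auto split: if_splits)
      thus ?thesis using re unfolding Bc_def by blast
    qed
    have nex: "\<not> (\<exists>j. 1 \<le> j \<and> j < n \<and> ?r j \<noteq> 0)" using rdef by auto
    have rn: "?r n = k 1" using rdef n1 by simp
    have "Phi d n ?r = restrict (\<lambda>j. k 1) {1..n}" by (simp only: Phi_def if_not_P[OF nex] rn)
    also have "\<dots> = k"
    proof (rule exps_eqI[OF _ ke])
      show "restrict (\<lambda>j. k 1) {1..n} \<in> exps d n" unfolding exps_def using k1 by auto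
      fix j assume "1 \<le> j" "j \<le> n"
      thus "restrict (\<lambda>j. k 1) {1..n} j = k j" using False by (cases "j = 1") auto
    qed
    finally show ?thesis using rB by simp
  qed
qed

lemma card_VV_le: assumes "d \<ge> 2" "n \<ge> 1" shows "card (VV d n) \<le> card (Bc d n)"
proof (rule card_inj_on_le)
  show "inj_on (Psi d n) (VV d n)"
    by (rule inj_on_inverseI[where g="Phi d n"]) (use Psi_props[OF assms] in blast)
  show "Psi d n ` VV d n \<subseteq> Bc d n" using Psi_props[OF assms] by blast
  show "finite (Bc d n)" by simp
qed


theorem mainTheorem17:
  fixes d n :: nat
  assumes "d \<ge> 2" and "n \<ge> 1"
  shows "int (quot_dim (GA d n) (R1 d n))
           = (2 ^ (n - 1) - 1) * (int d) ^ 2 - (2 ^ (n - 1) - 2) * int d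
      \<and> Bset d n \<subseteq> exps d n
      \<and> quot_basis (GA d n) (R1 d n) (Bset d n) (mono d n)
      \<and> (d = 2 \<longrightarrow> Bset d n = exps d n)
      \<and> (d > 2 \<longrightarrow> Bset d n = {r \<in> exps d n. \<not> (\<exists>i k. 1 \<le> i \<and> i < k \<and> k \<le> n \<and> k - i \<ge> 2
                                                   \<and> mdvd n (xixk2 n i k) r)})"
proof -
  note d2 = assms(1) and n1 = assms(2)
  have BB: "Bset d n = Bc d n" by (rule Bset_Bc[OF d2 n1])
  have qb: "quot_basis (GA d n) (R1 d n) (Bc d n) (mono d n)"
    by (rule Bc_basis[OF d2 n1 card_VV_le[OF d2 n1]])
  have ce: "card (Bc d n) = card (VV d n)" by (rule basis_card[OF d2 qb])
  have qd: "quot_dim (GA d n) (R1 d n) = card (Bc d n)"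
    unfolding quot_dim_def
  proof (rule the_equality)
    show "\<exists>(I :: (nat \<Rightarrow> nat) set) b. card I = card (Bc d n) \<and> quot_basis (GA d n) (R1 d n) I b"
      using qb by blast
    fix m assume "\<exists>(I :: (nat \<Rightarrow> nat) set) b. card I = m \<and> quot_basis (GA d n) (R1 d n) I b"
    then obtain I :: "(nat \<Rightarrow> nat) set" and b where "card I = m" "quot_basis (GA d n) (R1 d n) I b" by blast
    thus "m = card (Bc d n)" using basis_card[OF d2] ce by metis
  qed
  have c1: "int (quot_dim (GA d n) (R1 d n))
           = (2 ^ (n - 1) - 1) * (int d) ^ 2 - (2 ^ (n - 1) - 2) * int d"
    unfolding qd by (rule card_Bc[OF d2 n1])
  have c2: "Bset d n \<subseteq> exps d n" unfolding BB Bc_def by auto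
  have c4: "d = 2 \<longrightarrow> Bset d n = exps d n" using BB Bc_d2 by auto
  have c5: "d > 2 \<longrightarrow> Bset d n = {r \<in> exps d n. \<not> (\<exists>i k. 1 \<le> i \<and> i < k \<and> k \<le> n \<and> k - i \<ge> 2
                                                   \<and> mdvd n (xixk2 n i k) r)}"
    using BB Bc_char by auto
  show ?thesis using c1 c2 qb c4 c5 BB by simp
qed


end
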